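(* Let $r\ge 2$ be a constant and $\lambda\le n^r$. Consider $\lambda$ isolated islands (no migration), each independently running the (1+1) EA with mutation probability $1/n$ on $\mathrm{Fork}_{n,r}$ from an independent uniformly random initial string. Let $T$ be the number of rounds until some island has the optimum. Then $E(T)\in O\!\left(n\log n+\frac{n^{2r}}{\lambda 2^\lambda}+\frac{n^r}{\lambda}\right)$.
   Context: $\mathrm{Fork}_{n,r}(x)=n+1$ if $x=0^r1^{n-r}$, $n+2$ if $x=1^{n-r}0^r$ (the optimum), and $|x|_1$ otherwise, for $n\ge 2r$. The (1+1) EA: each round create $y$ by flipping each bit of the current $x$ independently with probability $1/n$ and set $x\gets y$ if the fitness of $y$ is at least that of $x$. Asymptotics are in $n$, with $\lambda=\lambda(n)$. *)

theory Defs
  imports "HOL-Probability.Probability"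
begin

text \<open>Bit strings of length n are bool lists; True = 1, False = 0.\<close>

definition ones :: "bool list \<Rightarrow> nat" where
  "ones x = length (filter id x)"

definition fork_trap :: "nat \<Rightarrow> nat \<Rightarrow> bool list" where
  "fork_trap n r = replicate r False @ replicate (n - r) True"

definition fork_opt :: "nat \<Rightarrow> nat \<Rightarrow> bool list" where
  "fork_opt n r = replicate (n - r) True @ replicate r False"

definition fork :: "nat \<Rightarrow> nat \<Rightarrow> bool list \<Rightarrow> nat" where
  "fork n r x = (if x = fork_trap n r then n + 1
                 else if x = fork_opt n r then n + 2
                 else ones x)"

fun mutate :: "real \<Rightarrow> bool list \<Rightarrow> bool list pmf" where
  "mutate p [] = return_pmf []"
| "mutate p (b # bs) =
     bind_pmf (bernoulli_pmf p) (\<lambda>f. bind_pmf (mutate p bs) (\<lambda>rest. return_pmf ((b \<noteq> f) # rest)))"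

definition ea_step :: "nat \<Rightarrow> nat \<Rightarrow> bool list \<Rightarrow> bool list pmf" where
  "ea_step n r x = bind_pmf (mutate (1 / real n) x)
      (\<lambda>y. return_pmf (if fork n r y \<ge> fork n r x then y else x))"

fun indep_list :: "'a pmf list \<Rightarrow> 'a list pmf" where
  "indep_list [] = return_pmf []"
| "indep_list (p # ps) = bind_pmf p (\<lambda>x. bind_pmf (indep_list ps) (\<lambda>xs. return_pmf (x # xs)))"

definition has_opt :: "nat \<Rightarrow> nat \<Rightarrow> bool list list \<Rightarrow> bool" where
  "has_opt n r xs = (\<exists>x\<in>set xs. x = fork_opt n r)"

text \<open>One round of lambda isolated islands, each independently performing one EA step;
  the process is stopped (frozen) once some island holds the optimum, so that
  "no island has the optimum at time t" is exactly the event T > t.\<close>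
definition islands_step :: "nat \<Rightarrow> nat \<Rightarrow> bool list list \<Rightarrow> bool list list pmf" where
  "islands_step n r xs = (if has_opt n r xs then return_pmf xs
                          else indep_list (map (ea_step n r) xs))"

definition islands_init :: "nat \<Rightarrow> nat \<Rightarrow> bool list list pmf" where
  "islands_init n lam = indep_list (replicate lam (pmf_of_set {x. length x = n}))"

fun islands_state :: "nat \<Rightarrow> nat \<Rightarrow> nat \<Rightarrow> nat \<Rightarrow> bool list list pmf" where
  "islands_state n r lam 0 = islands_init n lam"
| "islands_state n r lam (Suc t) = bind_pmf (islands_state n r lam t) (islands_step n r)"

text \<open>Expected value of the first hitting time T (rounds until some island holds the optimum),
  via E(T) = sum over t \<ge> 0 of Pr(T > t), in the extended nonnegative reals (may be infinite).\<close>
definition expected_T :: "nat \<Rightarrow> nat \<Rightarrow> nat \<Rightarrow> ennreal" where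
  "expected_T n r lam =
     (\<Sum>t. ennreal (measure_pmf.prob (islands_state n r lam t) {xs. \<not> has_opt n r xs}))"

end

theory Submission
  imports Defs
begin


fun ham :: "bool list \<Rightarrow> bool list \<Rightarrow> nat" where
  "ham (a # as) (b # bs) = (if a = b then 0 else 1) + ham as bs"
| "ham _ _ = 0"

lemma ham_le: "ham xs ys \<le> length xs"
  by (induction xs ys rule: ham.induct) auto

lemma mutate_Cons: "mutate p (b # bs) = map_pmf (\<lambda>(f, rest). (b \<noteq> f) # rest) (pair_pmf (bernoulli_pmf p) (mutate p bs))"
  by (simp add: pair_pmf_def map_pmf_def bind_assoc_pmf bind_return_pmf)

lemma set_pmf_mutate: "y \<in> set_pmf (mutate p x) \<Longrightarrow> length y = length x"
proof (induction x arbitrary: y)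
  case Nil
  then show ?case by simp
next
  case (Cons b bs)
  then show ?case by (auto simp: mutate_Cons)
qed

lemma pmf_mutate:
  assumes "0 \<le> p" "p \<le> 1" "length y = length x"
  shows "pmf (mutate p x) y = p ^ ham x y * (1 - p) ^ (length x - ham x y)"
  using assms(3)
proof (induction x arbitrary: y)
  case Nil
  then show ?case by simp
next
  case (Cons b bs)
  then obtain c cs where y: "y = c # cs" "length cs = length bs" by (cases y) auto
  have pre: "(\<lambda>(f, rest). (b \<noteq> f) # rest) -` {c # cs} = {b \<noteq> c} \<times> {cs}"
    by auto
  have "pmf (mutate p (b # bs)) y = measure_pmf.prob (pair_pmf (bernoulli_pmf p) (mutate p bs)) ({b \<noteq> c} \<times> {cs})"
    unfolding mutate_Cons y pmf_map pre by simp
  also have "\<dots> = pmf (bernoulli_pmf p) (b \<noteq> c) * pmf (mutate p bs) cs"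
    by (simp add: measure_pmf_prob_product measure_pmf_single pmf_pair)
  also have "\<dots> = (if b = c then 1 - p else p) * (p ^ ham bs cs * (1 - p) ^ (length bs - ham bs cs))"
    using Cons.IH[OF y(2)] assms by auto
  also have "\<dots> = p ^ ham (b # bs) y * (1 - p) ^ (length (b # bs) - ham (b # bs) y)"
    using ham_le[of bs cs] by (auto simp: y Suc_diff_le)
  finally show ?case .
qed


lemma ham_append: "length a = length a' \<Longrightarrow> ham (a @ b) (a' @ b') = ham a a' + ham b b'"
  by (induction a a' rule: ham.induct) auto

lemma ham_replicate: "ham (replicate k a) (replicate k b) = (if a = b then 0 else k)"
  by (induction k) auto

lemma ham_rev: "length x = length y \<Longrightarrow> ham (rev x) (rev y) = ham x y"
proof (induction x y rule: ham.induct)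
  case (1 a as b bs)
  then show ?case by (simp add: ham_append)
qed auto

lemma ham_self: "ham x x = 0" by (induction x) auto

lemma ham_upd: "i < length x \<Longrightarrow> \<not> x ! i \<Longrightarrow> ham x (x[i := True]) = 1"
proof (induction x arbitrary: i)
  case Nil then show ?case by simp
next
  case (Cons a x)
  show ?case
  proof (cases i)
    case 0 then show ?thesis using Cons by (simp add: ham_self)
  next
    case (Suc j)
    have "ham x x = 0" by (induction x) auto
    then show ?thesis using Cons Suc by auto
  qed
qed

lemma mutate_rev:
  assumes "0 \<le> p" "p \<le> 1"
  shows "mutate p (rev x) = map_pmf rev (mutate p x)"
proof (rule pmf_eqI)
  fix z
  have "pmf (map_pmf rev (mutate p x)) z = pmf (mutate p x) (rev z)"
    by (metis pmf_map_inj' inj_on_rev rev_rev_ident inj_def)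
  moreover have "pmf (mutate p (rev x)) z = pmf (mutate p x) (rev z)"
  proof (cases "length z = length x")
    case True
    then show ?thesis using assms
      by (simp add: pmf_mutate ham_rev[of x "rev z", symmetric])
  next
    case False
    then show ?thesis
      by (metis length_rev pmf_eq_0_set_pmf set_pmf_mutate)
  qed
  ultimately show "pmf (mutate p (rev x)) z = pmf (map_pmf rev (mutate p x)) z" by simp
qed

lemma ones_le: "ones x \<le> length x"
  unfolding ones_def by simp

lemma ones_rev: "ones (rev x) = ones x"
  unfolding ones_def by (simp add: rev_filter[symmetric])

lemma len_trap[simp]: "r \<le> n \<Longrightarrow> length (fork_trap n r) = n"
  by (simp add: fork_trap_def)
lemma len_opt[simp]: "r \<le> n \<Longrightarrow> length (fork_opt n r) = n"
  by (simp add: fork_opt_def)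
lemma rev_trap[simp]: "rev (fork_trap n r) = fork_opt n r"
  by (simp add: fork_trap_def fork_opt_def)
lemma rev_opt[simp]: "rev (fork_opt n r) = fork_trap n r"
  by (simp add: fork_trap_def fork_opt_def)
lemma trap_ne_opt: "0 < r \<Longrightarrow> r < n \<Longrightarrow> fork_trap n r \<noteq> fork_opt n r"
  by (cases r; cases "n - r") (auto simp: fork_trap_def fork_opt_def)

definition acc :: "nat \<Rightarrow> nat \<Rightarrow> bool list \<Rightarrow> bool list \<Rightarrow> bool list" where
  "acc n r x y = (if fork n r y \<ge> fork n r x then y else x)"

lemma ea_step_map: "ea_step n r x = map_pmf (acc n r x) (mutate (1 / real n) x)"
  by (simp add: ea_step_def map_pmf_def acc_def)


lemma one_minus_pow_ge:
  assumes "n \<ge> 1" "k \<ge> 1"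
  shows "(1 - 1 / real n) ^ (n - k) \<ge> exp (-1)"
proof (cases "n = 1")
  case True then show ?thesis using assms by simp
next
  case False
  define m where "m = n - 1"
  have m: "m \<ge> 1" "real n = real m + 1" using False assms by (auto simp: m_def)
  have "(1 + 1 / real m) ^ m \<le> exp (1 / real m) ^ m"
    by (rule power_mono) (auto simp: add.commute exp_ge_add_one_self)
  also have "\<dots> = exp 1" using m by (simp add: exp_of_nat_mult[symmetric])
  finally have A: "(1 + 1 / real m) ^ m \<le> exp 1" .
  have B: "1 - 1 / real n = inverse (1 + 1 / real m)"
    using m by (simp add: field_simps)
  have "exp (-1) \<le> inverse ((1 + 1 / real m) ^ m)"
  proof -
    have "0 < (1 + 1 / real m) ^ m" by (simp add: add_pos_nonneg)
    then show ?thesis using le_imp_inverse_le[OF A] by (simp add: exp_minus)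
  qed
  also have "\<dots> = (1 - 1 / real n) ^ m" by (simp add: B power_inverse)
  also have "\<dots> \<le> (1 - 1 / real n) ^ (n - k)"
    by (rule power_decreasing) (use assms m in \<open>auto simp: m_def\<close>)
  finally show ?thesis .
qed

lemma pmf_map_ge: "f a = b \<Longrightarrow> pmf M a \<le> pmf (map_pmf f M) b"
  unfolding pmf_map by (simp add: measure_pmf_single[symmetric] measure_pmf.finite_measure_mono)

context
  fixes n r :: nat
  assumes r0: "0 < r" and rn: "2 * r \<le> n"
begin

lemma r_less_n: "r < n" using r0 rn by linarith

lemma trap_ne_opt': "fork_trap n r \<noteq> fork_opt n r"
  using trap_ne_opt r0 r_less_n by blast

lemma fork_other: "x \<noteq> fork_trap n r \<Longrightarrow> x \<noteq> fork_opt n r \<Longrightarrow> fork n r x = ones x"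
  by (simp add: fork_def)

lemma fork_opt_val: "fork n r (fork_opt n r) = n + 2"
  using trap_ne_opt' by (simp add: fork_def)
lemma fork_trap_val: "fork n r (fork_trap n r) = n + 1"
  by (simp add: fork_def)

lemma fork_le_n: "length x = n \<Longrightarrow> x \<noteq> fork_trap n r \<Longrightarrow> x \<noteq> fork_opt n r \<Longrightarrow> fork n r x \<le> n"
  using ones_le[of x] by (simp add: fork_def)

lemma ea_opt: "ea_step n r (fork_opt n r) = return_pmf (fork_opt n r)"
proof -
  have "map_pmf (acc n r (fork_opt n r)) (mutate (1 / real n) (fork_opt n r))
      = map_pmf (\<lambda>_. fork_opt n r) (mutate (1 / real n) (fork_opt n r))"
  proof (rule map_pmf_cong[OF refl])
    fix y assume y: "y \<in> set_pmf (mutate (1 / real n) (fork_opt n r))"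
    then have "length y = n" using set_pmf_mutate r_less_n by fastforce
    then have "y \<noteq> fork_opt n r \<Longrightarrow> fork n r y < n + 2"
      using fork_le_n[of y] fork_trap_val by (cases "y = fork_trap n r") auto
    then show "acc n r (fork_opt n r) y = fork_opt n r"
      unfolding acc_def fork_opt_val by (cases "y = fork_opt n r") auto
  qed
  then show ?thesis by (simp add: ea_step_map map_pmf_const)
qed

lemma ea_len: "length x = n \<Longrightarrow> y \<in> set_pmf (ea_step n r x) \<Longrightarrow> length y = n"
  unfolding ea_step_map acc_def by (auto dest: set_pmf_mutate split: if_splits)

lemma ea_trap: "y \<in> set_pmf (ea_step n r (fork_trap n r)) \<Longrightarrow> y = fork_trap n r \<or> y = fork_opt n r"
proof -
  assume y: "y \<in> set_pmf (ea_step n r (fork_trap n r))"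
  then obtain z where z: "z \<in> set_pmf (mutate (1 / real n) (fork_trap n r))" "y = acc n r (fork_trap n r) z"
    unfolding ea_step_map by auto
  have "length z = n" using z set_pmf_mutate r_less_n by fastforce
  then show ?thesis using z fork_le_n[of z] unfolding acc_def fork_trap_val
    by (auto split: if_splits)
qed

lemma ea_other: "length x = n \<Longrightarrow> x \<noteq> fork_trap n r \<Longrightarrow> x \<noteq> fork_opt n r \<Longrightarrow>
   y \<in> set_pmf (ea_step n r x) \<Longrightarrow> y = fork_trap n r \<or> y = fork_opt n r \<or> ones y \<ge> ones x"
proof -
  assume x: "length x = n" "x \<noteq> fork_trap n r" "x \<noteq> fork_opt n r" and y: "y \<in> set_pmf (ea_step n r x)"
  then obtain z where z: "z \<in> set_pmf (mutate (1 / real n) x)" "y = acc n r x z"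
    unfolding ea_step_map by auto
  show ?thesis using z x fork_other unfolding acc_def
    by (cases "z = fork_trap n r \<or> z = fork_opt n r") (auto split: if_splits)
qed

lemma acc_rev:
  assumes x: "length x = n" "x \<noteq> fork_trap n r" "x \<noteq> fork_opt n r" and z: "length z = n"
  shows "acc n r (rev x) (rev z) = rev (acc n r x z)"
proof -
  have rx: "rev x \<noteq> fork_trap n r" "rev x \<noteq> fork_opt n r"
    using x by (metis rev_opt rev_rev_ident rev_trap)+
  have fx: "fork n r (rev x) = fork n r x"
    using x rx by (simp add: fork_other ones_rev)
  have "fork n r x \<le> n" using fork_le_n x by blast
  show ?thesis
  proof (cases "z = fork_trap n r \<or> z = fork_opt n r")
    case True
    then have "rev z = fork_trap n r \<or> rev z = fork_opt n r" by auto
    then have "fork n r (rev z) > n" "fork n r z > n" using True fork_opt_val fork_trap_val by auto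
    then show ?thesis unfolding acc_def fx using \<open>fork n r x \<le> n\<close> by auto
  next
    case False
    then have "rev z \<noteq> fork_trap n r" "rev z \<noteq> fork_opt n r"
      by (metis rev_opt rev_rev_ident rev_trap)+
    then have "fork n r (rev z) = fork n r z" using False by (simp add: fork_other ones_rev)
    then show ?thesis unfolding acc_def fx by auto
  qed
qed

lemma ea_rev:
  assumes x: "length x = n" "x \<noteq> fork_trap n r" "x \<noteq> fork_opt n r"
  shows "ea_step n r (rev x) = map_pmf rev (ea_step n r x)"
proof -
  have p: "0 \<le> 1 / real n" "1 / real n \<le> 1" using r_less_n by auto
  have "ea_step n r (rev x) = map_pmf (\<lambda>z. acc n r (rev x) (rev z)) (mutate (1 / real n) x)"
    unfolding ea_step_map mutate_rev[OF p] by (simp add: map_pmf_comp)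
  also have "\<dots> = map_pmf (\<lambda>z. rev (acc n r x z)) (mutate (1 / real n) x)"
    by (rule map_pmf_cong[OF refl]) (use acc_rev x set_pmf_mutate in auto)
  also have "\<dots> = map_pmf rev (ea_step n r x)"
    unfolding ea_step_map by (simp add: map_pmf_comp)
  finally show ?thesis .
qed

end


definition Ln :: "nat \<Rightarrow> bool list set" where "Ln n = {x. length x = n}"

fun single :: "nat \<Rightarrow> nat \<Rightarrow> nat \<Rightarrow> bool list pmf" where
  "single n r 0 = pmf_of_set (Ln n)"
| "single n r (Suc t) = bind_pmf (single n r t) (ea_step n r)"

definition Ex :: "nat \<Rightarrow> bool list pmf \<Rightarrow> (bool list \<Rightarrow> real) \<Rightarrow> real" where
  "Ex n M f = (\<Sum>x\<in>Ln n. pmf M x * f x)"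

lemma finite_Ln: "finite (Ln n)"
proof -
  have "Ln n = {xs. set xs \<subseteq> (UNIV :: bool set) \<and> length xs = n}" by (auto simp: Ln_def)
  then show ?thesis using finite_lists_length_eq[of "UNIV :: bool set" n] by simp
qed

lemma Ln_ne: "Ln n \<noteq> {}"
  by (auto simp: Ln_def intro!: exI[of _ "replicate n True"])

lemma pmf_bind_sum:
  assumes "set_pmf M \<subseteq> Ln n"
  shows "pmf (bind_pmf M f) x = (\<Sum>y\<in>Ln n. pmf M y * pmf (f y) x)"
  unfolding pmf_bind using assms
  by (subst integral_measure_pmf_real[OF finite_Ln]) (auto simp: mult.commute)

lemma Ex_expectation:
  assumes "set_pmf M \<subseteq> Ln n"
  shows "Ex n M f = measure_pmf.expectation M f"
  unfolding Ex_def using assms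
  by (subst integral_measure_pmf_real[OF finite_Ln]) (auto simp: mult.commute)

lemma Ex_bind:
  assumes "set_pmf M \<subseteq> Ln n"
  shows "Ex n (bind_pmf M f) g = (\<Sum>y\<in>Ln n. pmf M y * Ex n (f y) g)"
proof -
  have "(\<Sum>x\<in>Ln n. (\<Sum>y\<in>Ln n. pmf M y * pmf (f y) x) * g x)
      = (\<Sum>x\<in>Ln n. \<Sum>y\<in>Ln n. pmf M y * (pmf (f y) x * g x))"
    by (simp add: sum_distrib_right mult.assoc)
  also have "\<dots> = (\<Sum>y\<in>Ln n. \<Sum>x\<in>Ln n. pmf M y * (pmf (f y) x * g x))"
    by (rule sum.swap)
  also have "\<dots> = (\<Sum>y\<in>Ln n. pmf M y * (\<Sum>x\<in>Ln n. pmf (f y) x * g x))"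
    by (simp add: sum_distrib_left)
  finally show ?thesis unfolding Ex_def pmf_bind_sum[OF assms] by simp
qed


lemma Ex_mono:
  assumes "\<And>x. x \<in> Ln n \<Longrightarrow> f x \<le> g x"
  shows "Ex n M f \<le> Ex n M g"
  unfolding Ex_def using assms by (intro sum_mono mult_left_mono) auto

lemma Ex_nonneg: "(\<And>x. x \<in> Ln n \<Longrightarrow> f x \<ge> 0) \<Longrightarrow> Ex n M f \<ge> 0"
  unfolding Ex_def by (intro sum_nonneg) auto

lemma sum_pmf_Ln: "set_pmf M \<subseteq> Ln n \<Longrightarrow> (\<Sum>x\<in>Ln n. pmf M x) = 1"
  using sum_pmf_eq_1[OF finite_Ln] by blast

lemma Ex_const: "set_pmf M \<subseteq> Ln n \<Longrightarrow> Ex n M (\<lambda>_. c) = c"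
  unfolding Ex_def by (simp add: sum_distrib_right[symmetric] sum_pmf_Ln)

context
  fixes n r :: nat
  assumes r0: "0 < r" and rn: "2 * r \<le> n"
begin

abbreviation "opt \<equiv> fork_opt n r"
abbreviation "trap \<equiv> fork_trap n r"
definition "NN = Ln n - {fork_trap n r, fork_opt n r}"

lemma opt_Ln: "opt \<in> Ln n" and trap_Ln: "trap \<in> Ln n"
  using r_less_n[OF r0 rn] by (auto simp: Ln_def)

lemma ea_Ln: "x \<in> Ln n \<Longrightarrow> set_pmf (ea_step n r x) \<subseteq> Ln n"
  using ea_len[OF r0 rn] by (auto simp: Ln_def)

lemma set_single: "set_pmf (single n r t) \<subseteq> Ln n"
proof (induction t)
  case 0 then show ?case using finite_Ln Ln_ne by simp
next
  case (Suc t) then show ?case using ea_Ln by auto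
qed

lemma sum_split: "(\<Sum>y\<in>Ln n. f y) = f trap + f opt + (\<Sum>y\<in>NN. f y)"
proof -
  have "(\<Sum>y\<in>Ln n. f y) = (\<Sum>y\<in>{trap, opt}. f y) + (\<Sum>y\<in>NN. f y)"
    unfolding NN_def using opt_Ln trap_Ln finite_Ln
    by (subst sum.subset_diff[of "{trap, opt}"]) (auto simp: add.commute)
  then show ?thesis using trap_ne_opt'[OF r0 rn] by simp
qed

lemma Ex_ea:
  assumes "x \<in> Ln n"
  shows "Ex n (ea_step n r x) g = (\<Sum>z\<in>Ln n. pmf (mutate (1 / real n) x) z * g (acc n r x z))"
proof -
  have "set_pmf (mutate (1 / real n) x) \<subseteq> Ln n"
    using assms set_pmf_mutate by (auto simp: Ln_def)
  then show ?thesis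
    using Ex_expectation[OF ea_Ln[OF assms]] Ex_expectation[of "mutate (1 / real n) x" n]
    unfolding Ex_def ea_step_map by simp
qed

definition "eT t x = (\<Sum>y\<in>NN. pmf (single n r t) y * pmf (ea_step n r y) x)"

lemma pmf_single_Suc:
  "pmf (single n r (Suc t)) x = pmf (single n r t) trap * pmf (ea_step n r trap) x
     + pmf (single n r t) opt * pmf (ea_step n r opt) x + eT t x"
  unfolding single.simps pmf_bind_sum[OF set_single] sum_split eT_def by simp

lemma rev_NN: "x \<in> NN \<Longrightarrow> rev x \<in> NN"
proof -
  assume x: "x \<in> NN"
  have "rev x \<noteq> trap" using x unfolding NN_def by (metis insertCI DiffD2 rev_opt rev_rev_ident)
  moreover have "rev x \<noteq> opt" using x unfolding NN_def by (metis insertCI DiffD2 rev_trap rev_rev_ident)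
  ultimately show ?thesis using x unfolding NN_def Ln_def by simp
qed

lemma pmf_ea_NN: "x \<in> NN \<Longrightarrow> y \<in> {trap, opt} \<Longrightarrow> pmf (ea_step n r y) x = 0"
  using ea_trap[OF r0 rn] ea_opt[OF r0 rn] unfolding NN_def
  by (auto simp: pmf_eq_0_set_pmf)

lemma eT_rev:
  assumes sym: "\<And>y. y \<in> NN \<Longrightarrow> pmf (single n r t) (rev y) = pmf (single n r t) y"
  shows "eT t (rev x) = eT t x"
proof -
  have bij: "bij_betw rev NN NN"
    by (rule bij_betwI[of _ _ _ rev]) (auto intro: rev_NN)
  have "eT t (rev x) = (\<Sum>y\<in>NN. pmf (single n r t) (rev y) * pmf (ea_step n r (rev y)) (rev x))"
    unfolding eT_def by (rule sum.reindex_bij_betw[OF bij, symmetric])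
  also have "\<dots> = (\<Sum>y\<in>NN. pmf (single n r t) y * pmf (ea_step n r y) x)"
  proof (rule sum.cong[OF refl])
    fix y assume y: "y \<in> NN"
    then have "ea_step n r (rev y) = map_pmf rev (ea_step n r y)"
      using ea_rev[OF r0 rn] unfolding NN_def Ln_def by auto
    then have "pmf (ea_step n r (rev y)) (rev x) = pmf (ea_step n r y) x"
      by (simp add: pmf_map_inj')
    then show "pmf (single n r t) (rev y) * pmf (ea_step n r (rev y)) (rev x) = pmf (single n r t) y * pmf (ea_step n r y) x"
      using sym[OF y] by simp
  qed
  finally show ?thesis unfolding eT_def .
qed

lemma single_sym: "y \<in> NN \<Longrightarrow> pmf (single n r t) (rev y) = pmf (single n r t) y"
proof (induction t arbitrary: y)
  case 0
  have "rev y \<in> Ln n" "y \<in> Ln n" using 0 rev_NN unfolding NN_def by auto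
  then show ?case using finite_Ln[of n] Ln_ne[of n] by simp
next
  case (Suc t)
  have ry: "rev y \<in> NN" using rev_NN Suc.prems by blast
  show ?case
    unfolding pmf_single_Suc
    using eT_rev[OF Suc.IH] pmf_ea_NN[OF Suc.prems] pmf_ea_NN[OF ry] by simp
qed

lemma eT_opt_trap: "eT t opt = eT t trap"
  using eT_rev[OF single_sym] by (metis rev_trap)

end


context
  fixes n r :: nat
  assumes r0: "0 < r" and rn: "2 * r \<le> n"
begin

definition "po t = pmf (single n r t) (fork_opt n r)"
definition "pv t = pmf (single n r t) (fork_trap n r)"
definition "pu t = 1 - po t - pv t"
definition "KK = pmf (ea_step n r (fork_trap n r)) (fork_opt n r)"
definition "ee t = eT n r t (fork_opt n r)"

lemma ee_nonneg: "ee t \<ge> 0"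
  unfolding ee_def eT_def[OF r0 rn] by (intro sum_nonneg mult_nonneg_nonneg) auto

lemma ea_opt_opt: "pmf (ea_step n r (fork_opt n r)) (fork_opt n r) = 1" and ea_opt_trap: "pmf (ea_step n r (fork_opt n r)) (fork_trap n r) = 0"
  using ea_opt[OF r0 rn] trap_ne_opt'[OF r0 rn] by auto

lemma ea_trap_trap: "pmf (ea_step n r (fork_trap n r)) (fork_trap n r) = 1 - KK"
proof -
  have "sum (pmf (ea_step n r (fork_trap n r))) {(fork_trap n r), (fork_opt n r)} = 1"
    by (rule sum_pmf_eq_1) (use ea_trap[OF r0 rn] in auto)
  then show ?thesis unfolding KK_def using trap_ne_opt'[OF r0 rn] by simp
qed

lemma po_Suc: "po (Suc t) = pv t * KK + po t + ee t"
  unfolding po_def pv_def ee_def KK_def pmf_single_Suc[OF r0 rn] ea_opt_opt by simp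

lemma pv_Suc: "pv (Suc t) = pv t * (1 - KK) + ee t"
  unfolding po_def pv_def ee_def pmf_single_Suc[OF r0 rn] ea_opt_trap ea_trap_trap
  using eT_opt_trap[OF r0 rn] by simp

lemma pu_Suc: "pu (Suc t) = pu t - 2 * ee t"
  unfolding pu_def po_Suc pv_Suc by (simp add: algebra_simps)

lemma pu_sum: "pu t = (\<Sum>y\<in>NN n r. pmf (single n r t) y)"
  using sum_pmf_Ln[OF set_single[OF r0 rn, of t]] sum_split[OF r0 rn, of "pmf (single n r t)"]
  unfolding pu_def po_def pv_def by simp

lemma pu_nonneg: "pu t \<ge> 0"
  unfolding pu_sum by (intro sum_nonneg) auto

lemma pu_mono: "s \<le> t \<Longrightarrow> pu t \<le> pu s"
proof (induction t rule: dec_induct)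
  case (step t) then show ?case using pu_Suc[of t] ee_nonneg[of t] by simp
qed simp

lemma KK_bounds: "0 \<le> KK" "KK \<le> 1"
  unfolding KK_def by (auto simp: pmf_le_1)

lemma po0: "po 0 = pv 0"
  unfolding po_def pv_def using opt_Ln[OF r0 rn] trap_Ln[OF r0 rn] finite_Ln[of n] Ln_ne[of n] by simp

lemma pv_le_po: "pv t \<le> po t"
proof (induction t)
  case 0 then show ?case using po0 by simp
next
  case (Suc t)
  have "pv t \<ge> 0" unfolding pv_def by simp
  have h: "0 \<le> KK * pv t" using \<open>pv t \<ge> 0\<close> KK_bounds by simp
  show ?case unfolding po_Suc pv_Suc using Suc h by (simp add: right_diff_distrib)
qed

lemma pv_nonneg: "pv t \<ge> 0" unfolding pv_def by simp

lemma pv_le_half: "pv t \<le> 1 / 2"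
  using pv_le_po[of t] pu_nonneg[of t] unfolding pu_def by simp

lemma a_le_half: "1 - po t \<le> (1 + pu t) / 2"
  using pv_le_po[of t] unfolding pu_def by simp

lemma B3_aux:
  assumes q: "0 \<le> q" "q \<le> KK" and st: "s \<le> t"
  shows "pv t + pu t / 2 \<le> (1 - q) ^ (t - s) * pv s + pu s / 2"
  using st
proof (induction t rule: dec_induct)
  case base then show ?case by simp
next
  case (step t)
  have "pv (Suc t) + pu (Suc t) / 2 = (1 - KK) * pv t + pu t / 2"
    unfolding pv_Suc pu_Suc by (simp add: field_simps)
  also have "\<dots> \<le> (1 - q) * pv t + pu t / 2"
    using q pv_nonneg[of t] by (intro add_right_mono mult_right_mono) auto
  also have "\<dots> \<le> (1 - q) * ((1 - q) ^ (t - s) * pv s + pu s / 2 - pu t / 2) + pu t / 2"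
    using step.IH q KK_bounds by (intro add_right_mono mult_left_mono) auto
  also have "\<dots> \<le> (1 - q) ^ (Suc t - s) * pv s + pu s / 2"
  proof -
    have "pu t \<le> pu s" using pu_mono step.hyps by blast
    then have "(1 - q) * (pu s / 2 - pu t / 2) \<le> pu s / 2 - pu t / 2"
      using q KK_bounds by (intro mult_left_le_one_le) auto
    moreover have "(1 - q) ^ (Suc t - s) * pv s = (1 - q) * (1 - q) ^ (t - s) * pv s"
      using step.hyps by (simp add: Suc_diff_le)
    moreover have "(1 - q) * ((1 - q) ^ (t - s) * pv s + pu s / 2 - pu t / 2) + pu t / 2
       = (1 - q) * (1 - q) ^ (t - s) * pv s + (1 - q) * (pu s / 2 - pu t / 2) + pu t / 2"
      by (simp add: algebra_simps)
    ultimately show ?thesis by linarith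
  qed
  finally show ?case .
qed

lemma B3:
  assumes q: "0 \<le> q" "q \<le> KK" and st: "s \<le> t"
  shows "1 - po t \<le> (1 - q) ^ (t - s) / 2 + pu s"
proof -
  have "1 - po t = pv t + pu t" unfolding pu_def by simp
  also have "\<dots> \<le> (1 - q) ^ (t - s) * pv s + pu s / 2 + pu t / 2"
    using B3_aux[OF assms] by simp
  also have "\<dots> \<le> (1 - q) ^ (t - s) / 2 + pu s"
  proof -
    have "(1 - q) ^ (t - s) * pv s \<le> (1 - q) ^ (t - s) * (1 / 2)"
      using pv_le_half q KK_bounds by (intro mult_left_mono) auto
    moreover have "pu t \<le> pu s" using pu_mono st by blast
    ultimately show ?thesis by simp
  qed
  finally show ?thesis .
qed

lemma po_mono_Suc: "po t \<le> po (Suc t)"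
  unfolding po_Suc using pv_nonneg[of t] KK_bounds ee_nonneg[of t] by simp

lemma drift:
  assumes c: "0 \<le> c" and stp: "\<And>y. y \<in> Ln n \<Longrightarrow> Ex n (ea_step n r y) f \<le> c * f y"
    and f: "\<And>y. y \<in> Ln n \<Longrightarrow> 0 \<le> f y"
    and st: "s \<le> t"
  shows "Ex n (single n r t) f \<le> c ^ (t - s) * Ex n (single n r s) f"
  using st
proof (induction t rule: dec_induct)
  case base then show ?case by simp
next
  case (step t)
  have "Ex n (single n r (Suc t)) f = (\<Sum>y\<in>Ln n. pmf (single n r t) y * Ex n (ea_step n r y) f)"
    by (simp add: Ex_bind[OF set_single[OF r0 rn]])
  also have "\<dots> \<le> (\<Sum>y\<in>Ln n. pmf (single n r t) y * (c * f y))"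
    by (intro sum_mono mult_left_mono stp) auto
  also have "\<dots> = c * Ex n (single n r t) f"
    unfolding Ex_def by (simp add: sum_distrib_left algebra_simps)
  also have "\<dots> \<le> c * (c ^ (t - s) * Ex n (single n r s) f)"
    using step.IH c by (intro mult_left_mono) auto
  also have "\<dots> = c ^ (Suc t - s) * Ex n (single n r s) f"
    using step.hyps by (simp add: Suc_diff_le)
  finally show ?case .
qed

end


lemma ones_upd: "i < length y \<Longrightarrow> \<not> y ! i \<Longrightarrow> ones (y[i := True]) = ones y + 1"
proof (induction y arbitrary: i)
  case Nil then show ?case by simp
next
  case (Cons a y)
  then show ?case by (cases i) (auto simp: ones_def)
qed

lemma card_zeros: "card {i. i < length y \<and> \<not> y ! i} = length y - ones y"
proof -
  have "length (filter Not y) = card {i. i < length y \<and> \<not> y ! i}"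
    by (simp add: length_filter_conv_card)
  moreover have "length (filter Not y) + ones y = length y"
    unfolding ones_def using sum_length_filter_compl[of id y] by (simp add: comp_def)
  ultimately show ?thesis by simp
qed

lemma ham_trap_opt: "2 * r \<le> n \<Longrightarrow> ham (fork_trap n r) (fork_opt n r) = 2 * r"
proof -
  assume rn: "2 * r \<le> n"
  have t: "fork_trap n r = replicate r False @ (replicate (n - 2 * r) True @ replicate r True)"
    using rn by (simp add: fork_trap_def replicate_add[symmetric])
  have o: "fork_opt n r = replicate r True @ (replicate (n - 2 * r) True @ replicate r False)"
    using rn by (simp add: fork_opt_def replicate_add[symmetric] add.commute)
  show ?thesis unfolding t o by (simp add: ham_append ham_replicate)
qed

lemma ham_ones_opt: "r \<le> n \<Longrightarrow> ham (replicate n True) (fork_opt n r) = r"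
proof -
  assume rn: "r \<le> n"
  have t: "replicate n True = replicate (n - r) True @ replicate r True"
    using rn by (simp add: replicate_add[symmetric])
  show ?thesis unfolding t fork_opt_def by (simp add: ham_append ham_replicate)
qed

context
  fixes n r :: nat
  assumes r0: "0 < r" and rn: "2 * r \<le> n"
begin

definition "gb b y = (if y = fork_trap n r \<or> y = fork_opt n r then 0 else b + real (n - ones y))"

lemma gb_nonneg: "b \<ge> 0 \<Longrightarrow> gb b y \<ge> 0"
  unfolding gb_def by auto

lemma p_ok: "0 \<le> 1 / real n" "1 / real n \<le> (1::real)"
  using r_less_n[OF r0 rn] by auto

lemma one_step_generic:
  assumes y: "y \<in> Ln n" and F: "F \<subseteq> Ln n"
    and all: "\<And>z. z \<in> Ln n \<Longrightarrow> g (acc n r y z) \<le> G"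
    and onF: "\<And>z. z \<in> F \<Longrightarrow> g (acc n r y z) \<le> G - 1"
  shows "Ex n (ea_step n r y) g \<le> G - (\<Sum>z\<in>F. pmf (mutate (1 / real n) y) z)"
proof -
  let ?M = "mutate (1 / real n) y"
  have sM: "set_pmf ?M \<subseteq> Ln n" using y set_pmf_mutate by (auto simp: Ln_def)
  have "Ex n (ea_step n r y) g = (\<Sum>z\<in>Ln n. pmf ?M z * g (acc n r y z))"
    by (rule Ex_ea[OF r0 rn y])
  also have "\<dots> \<le> (\<Sum>z\<in>Ln n. pmf ?M z * G - (if z \<in> F then pmf ?M z else 0))"
  proof (rule sum_mono)
    fix z assume z: "z \<in> Ln n"
    show "pmf ?M z * g (acc n r y z) \<le> pmf ?M z * G - (if z \<in> F then pmf ?M z else 0)"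
    proof (cases "z \<in> F")
      case True
      then have "pmf ?M z * g (acc n r y z) \<le> pmf ?M z * (G - 1)"
        using onF by (intro mult_left_mono) auto
      then show ?thesis using True by (simp add: algebra_simps)
    next
      case False
      then show ?thesis using all[OF z] by (simp add: mult_left_mono)
    qed
  qed
  also have "\<dots> = G - (\<Sum>z\<in>F. pmf ?M z)"
  proof -
    have "(\<Sum>z\<in>Ln n. (if z \<in> F then pmf ?M z else 0)) = (\<Sum>z\<in>F. pmf ?M z)"
    proof -
      have "Ln n \<inter> F = F" using F by auto
      then show ?thesis using sum.inter_restrict[OF finite_Ln, of "pmf ?M" n F] by simp
    qed
    moreover have "(\<Sum>z\<in>Ln n. pmf ?M z * G) = G"
      using sum_pmf_Ln[OF sM] by (simp add: sum_distrib_right[symmetric])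
    ultimately show ?thesis by (simp add: sum_subtractf)
  qed
  finally show ?thesis .
qed

lemma Ex_ea_S:
  assumes "y = fork_trap n r \<or> y = fork_opt n r" "b \<ge> 0"
  shows "Ex n (ea_step n r y) (gb b) = 0"
proof -
  have "\<And>x. x \<in> Ln n \<Longrightarrow> pmf (ea_step n r y) x * gb b x = 0"
  proof -
    fix x assume "x \<in> Ln n"
    show "pmf (ea_step n r y) x * gb b x = 0"
    proof (cases "x = fork_trap n r \<or> x = fork_opt n r")
      case True then show ?thesis by (simp add: gb_def)
    next
      case False
      then have "pmf (ea_step n r y) x = 0"
        using assms ea_trap[OF r0 rn] ea_opt[OF r0 rn] by (auto simp: pmf_eq_0_set_pmf)
      then show ?thesis by simp
    qed
  qed
  then show ?thesis unfolding Ex_def by (intro sum.neutral ballI) blast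
qed

lemma acc_gb_le:
  assumes y: "y \<in> Ln n" "y \<noteq> fork_trap n r" "y \<noteq> fork_opt n r" and z: "z \<in> Ln n" and b: "b \<ge> 0"
  shows "gb b (acc n r y z) \<le> gb b y"
proof (cases "fork n r z \<ge> fork n r y")
  case True
  then have a: "acc n r y z = z" by (simp add: acc_def)
  show ?thesis
  proof (cases "z = fork_trap n r \<or> z = fork_opt n r")
    case True then show ?thesis using a y b by (simp add: gb_def)
  next
    case False
    then have "ones z \<ge> ones y" using \<open>fork n r z \<ge> fork n r y\<close> y fork_other[OF r0 rn] by auto
    then show ?thesis using a y False by (simp add: gb_def)
  qed
next
  case False then show ?thesis by (simp add: acc_def)
qed

lemma flip_F:
  assumes y: "y \<in> Ln n" "y \<noteq> fork_trap n r" "y \<noteq> fork_opt n r" and b: "b \<ge> 0"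
    and i: "i < n" "\<not> y ! i"
  shows "gb b (acc n r y (y[i := True])) \<le> gb b y - 1"
proof -
  let ?z = "y[i := True]"
  have len: "length y = n" using y by (simp add: Ln_def)
  have oz: "ones ?z = ones y + 1" using ones_upd[of i y] i len by simp
  have lz: "length ?z = n" using len by simp
  have "ones ?z \<le> n" using ones_le[of ?z] lz by simp
  have fy: "fork n r y = ones y" using fork_other[OF r0 rn] y by auto
  have acc: "acc n r y ?z = ?z"
  proof (cases "?z = fork_trap n r \<or> ?z = fork_opt n r")
    case True
    then have "fork n r ?z \<ge> n + 1" using fork_trap_val[OF r0 rn] fork_opt_val[OF r0 rn] by auto
    then show ?thesis using fy ones_le[of y] len by (simp add: acc_def)
  next
    case False
    then show ?thesis using fy oz fork_other[OF r0 rn] by (simp add: acc_def)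
  qed
  show ?thesis
    unfolding acc using y oz b \<open>ones ?z \<le> n\<close> by (auto simp: gb_def of_nat_diff)
qed

lemma sum_flip:
  assumes y: "y \<in> Ln n"
  shows "(\<Sum>z\<in>(\<lambda>i. y[i := True]) ` {i. i < n \<and> \<not> y ! i}. pmf (mutate (1 / real n) y) z)
          \<ge> real (n - ones y) / (exp 1 * real n)"
proof -
  let ?I = "{i. i < n \<and> \<not> y ! i}"
  have len: "length y = n" using y by (simp add: Ln_def)
  have inj: "inj_on (\<lambda>i. y[i := True]) ?I"
  proof (rule inj_onI)
    fix i j assume "i \<in> ?I" "j \<in> ?I" "y[i := True] = y[j := True]"
    then show "i = j" using len by (metis (mono_tags, lifting) mem_Collect_eq nth_list_update_eq nth_list_update_neq)
  qed
  have "(\<Sum>z\<in>(\<lambda>i. y[i := True]) ` ?I. pmf (mutate (1 / real n) y) z)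
      = (\<Sum>i\<in>?I. pmf (mutate (1 / real n) y) (y[i := True]))"
    by (rule sum.reindex[OF inj, unfolded comp_def])
  also have "\<dots> = (\<Sum>i\<in>?I. (1 / real n) * (1 - 1 / real n) ^ (n - 1))"
  proof (rule sum.cong[OF refl])
    fix i assume "i \<in> ?I"
    then show "pmf (mutate (1 / real n) y) (y[i := True]) = (1 / real n) * (1 - 1 / real n) ^ (n - 1)"
      using pmf_mutate[OF p_ok, of "y[i := True]" y] ham_upd[of i y] len by simp
  qed
  also have "\<dots> = real (card ?I) * ((1 / real n) * (1 - 1 / real n) ^ (n - 1))" by simp
  also have "card ?I = n - ones y" using card_zeros[of y] len by simp
  finally have eq: "(\<Sum>z\<in>(\<lambda>i. y[i := True]) ` ?I. pmf (mutate (1 / real n) y) z)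
      = real (n - ones y) * ((1 / real n) * (1 - 1 / real n) ^ (n - 1))" .
  have n1: "n \<ge> 1" using r_less_n[OF r0 rn] by simp
  have "exp (-1) \<le> (1 - 1 / real n) ^ (n - 1)" using one_minus_pow_ge[OF n1, of 1] by simp
  then have "1 / (exp 1 * real n) \<le> (1 / real n) * (1 - 1 / real n) ^ (n - 1)"
    using n1 by (simp add: exp_minus field_simps)
  then show ?thesis unfolding eq
    by (metis mult_left_mono of_nat_0_le_iff times_divide_eq_right mult_1_right)
qed

end


lemma ones_full: "ones y = length y \<Longrightarrow> y = replicate (length y) True"
proof (induction y)
  case Nil then show ?case by simp
next
  case (Cons a y)
  show ?case
  proof (cases a)
    case True
    then show ?thesis using Cons by (simp add: ones_def)
  next
    case False
    then have "ones (a # y) = ones y" by (simp add: ones_def)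
    then show ?thesis using Cons.prems ones_le[of y] by simp
  qed
qed

context
  fixes n r :: nat
  assumes r2: "2 \<le> r" and rn: "2 * r \<le> n"
begin

lemma r0: "0 < r" using r2 by simp

lemma gen_bound:
  assumes y: "y \<in> Ln n" "y \<noteq> fork_trap n r" "y \<noteq> fork_opt n r" and b: "b \<ge> 0"
  shows "Ex n (ea_step n r y) (gb n r b) \<le> gb n r b y - real (n - ones y) / (exp 1 * real n)"
proof -
  let ?F = "(\<lambda>i. y[i := True]) ` {i. i < n \<and> \<not> y ! i}"
  have F: "?F \<subseteq> Ln n" using y by (auto simp: Ln_def)
  have "Ex n (ea_step n r y) (gb n r b) \<le> gb n r b y - (\<Sum>z\<in>?F. pmf (mutate (1 / real n) y) z)"
    by (rule one_step_generic[OF r0 rn y(1) F])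
       (use acc_gb_le[OF r0 rn y _ b] flip_F[OF r0 rn y b] in auto)
  then show ?thesis using sum_flip[OF r0 rn y(1)] by linarith
qed

lemma drift_Z_step:
  assumes y: "y \<in> Ln n"
  shows "Ex n (ea_step n r y) (gb n r 0) \<le> (1 - 1 / (exp 1 * real n)) * gb n r 0 y"
proof (cases "y = fork_trap n r \<or> y = fork_opt n r")
  case True then show ?thesis using Ex_ea_S[OF r0 rn True] by (auto simp: gb_def[OF r0 rn])
next
  case False
  then have "Ex n (ea_step n r y) (gb n r 0) \<le> gb n r 0 y - real (n - ones y) / (exp 1 * real n)"
    using gen_bound[OF y] by auto
  also have "\<dots> = (1 - 1 / (exp 1 * real n)) * gb n r 0 y"
    using False by (simp add: gb_def[OF r0 rn] algebra_simps)
  finally show ?thesis .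
qed

definition "ppr = 1 / (exp 1 * real n ^ r)"

lemma n_ge4: "n \<ge> 4" using r2 rn by linarith

lemma pmf_ones_opt: "pmf (mutate (1 / real n) (replicate n True)) (fork_opt n r) \<ge> ppr"
proof -
  have rl: "r \<le> n" using rn by simp
  have "pmf (mutate (1 / real n) (replicate n True)) (fork_opt n r) = (1 / real n) ^ r * (1 - 1 / real n) ^ (n - r)"
    using pmf_mutate[OF p_ok[OF r0 rn], of "fork_opt n r" "replicate n True"] ham_ones_opt[OF rl] rl by simp
  moreover have "(1 - 1 / real n) ^ (n - r) \<ge> exp (-1)"
    using one_minus_pow_ge[of n r] r2 n_ge4 by simp
  moreover have "ppr = (1 / real n) ^ r * exp (-1)"
    unfolding ppr_def by (simp add: exp_minus power_divide divide_inverse power_inverse)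
  ultimately show ?thesis by (simp add: mult_left_mono)
qed

lemma KK_ge: "KK n r \<ge> 1 / (exp 1 * real n ^ (2 * r))"
proof -
  have "pmf (mutate (1 / real n) (fork_trap n r)) (fork_opt n r) \<le> KK n r"
    unfolding KK_def[OF r0 rn] ea_step_map
    by (rule pmf_map_ge) (simp add: acc_def fork_opt_val[OF r0 rn] fork_trap_val[OF r0 rn])
  moreover have "pmf (mutate (1 / real n) (fork_trap n r)) (fork_opt n r) = (1 / real n) ^ (2 * r) * (1 - 1 / real n) ^ (n - 2 * r)"
    using pmf_mutate[OF p_ok[OF r0 rn], of "fork_opt n r" "fork_trap n r"] ham_trap_opt[OF rn] rn by simp
  moreover have X: "(1 - 1 / real n) ^ (n - 2 * r) \<ge> exp (-1)"
    using one_minus_pow_ge[of n "2 * r"] r2 n_ge4 by simp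
  moreover have "1 / (exp 1 * real n ^ (2 * r)) = (1 / real n) ^ (2 * r) * exp (-1)"
    by (simp add: exp_minus power_divide divide_inverse power_inverse)
  moreover have "(1 / real n) ^ (2 * r) * exp (-1) \<le> (1 / real n) ^ (2 * r) * (1 - 1 / real n) ^ (n - 2 * r)"
    using X by (intro mult_left_mono) auto
  ultimately show ?thesis by linarith
qed

lemma drift_Psi_step:
  assumes y: "y \<in> Ln n"
  shows "Ex n (ea_step n r y) (gb n r 1) \<le> (1 - ppr) * gb n r 1 y"
proof (cases "y = fork_trap n r \<or> y = fork_opt n r")
  case True then show ?thesis using Ex_ea_S[OF r0 rn True] by (auto simp: gb_def[OF r0 rn])
next
  case False
  have len: "length y = n" using y by (simp add: Ln_def)
  show ?thesis
  proof (cases "ones y = n")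
    case True
    then have yy: "y = replicate n True" using ones_full[of y] len by simp
    have "Ex n (ea_step n r y) (gb n r 1) \<le> 1 - (\<Sum>z\<in>{fork_opt n r}. pmf (mutate (1 / real n) y) z)"
    proof (rule one_step_generic[OF r0 rn y])
      show "{fork_opt n r} \<subseteq> Ln n" using opt_Ln[OF r0 rn] by simp
      show "gb n r 1 (acc n r y z) \<le> 1" if "z \<in> Ln n" for z
        using acc_gb_le[OF r0 rn y _ _ that, of 1] False True by (simp add: gb_def[OF r0 rn])
      show "gb n r 1 (acc n r y z) \<le> 1 - 1" if "z \<in> {fork_opt n r}" for z
      proof -
        have "fork n r y \<le> n" using fork_le_n[OF r0 rn len] False by auto
        then have "acc n r y (fork_opt n r) = fork_opt n r"
          by (simp add: acc_def fork_opt_val[OF r0 rn])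
        then show ?thesis using that by (simp add: gb_def[OF r0 rn])
      qed
    qed
    also have "\<dots> \<le> 1 - ppr" using pmf_ones_opt yy by simp
    also have "\<dots> = (1 - ppr) * gb n r 1 y" using False True by (simp add: gb_def[OF r0 rn])
    finally show ?thesis .
  next
    case nf: False
    have z1: "ones y < n" using ones_le[of y] len nf by simp
    have "Ex n (ea_step n r y) (gb n r 1) \<le> gb n r 1 y - real (n - ones y) / (exp 1 * real n)"
      using gen_bound[OF y] False by auto
    also have "\<dots> \<le> (1 - ppr) * gb n r 1 y"
    proof -
      define z where "z = real (n - ones y)"
      have z: "z \<ge> 1" using z1 by (simp add: z_def)
      have g: "gb n r 1 y = 1 + z" using False by (simp add: gb_def[OF r0 rn] z_def)
      have "real n ^ r \<ge> real n * 2"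
      proof -
        have e: "real n ^ r = real n * real n ^ (r - 1)" using r2 by (simp add: power_eq_if)
        have h: "real n ^ (r - 1) \<ge> real n ^ 1"
          using r2 n_ge4 by (intro power_increasing) auto
        have "real n \<ge> 4" using n_ge4 by simp
        moreover have "real n \<le> real n ^ (r - 1)" using h by (simp only: power_one_right)
        ultimately have "real n ^ (r - 1) \<ge> 2" by linarith
        then have "real n * real n ^ (r - 1) \<ge> real n * 2" by (rule mult_left_mono) simp
        then show ?thesis using e by simp
      qed
      have npos: "real n > 0" using n_ge4 by simp
      have "(1 + z) / real n ^ r \<le> (2 * z) / real n ^ r"
        using z npos by (intro divide_right_mono) auto
      also have "\<dots> \<le> (2 * z) / (real n * 2)"
        using z npos \<open>real n ^ r \<ge> real n * 2\<close> by (intro divide_left_mono) auto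
      also have "\<dots> = z / real n" by simp
      finally have "(1 + z) / real n ^ r \<le> z / real n" .
      then have "((1 + z) / real n ^ r) / exp 1 \<le> (z / real n) / exp 1"
        by (intro divide_right_mono) auto
      then have "ppr * (1 + z) \<le> z / (exp 1 * real n)"
        unfolding ppr_def by (simp add: mult.commute)
      then show ?thesis unfolding g z_def[symmetric] by (simp add: algebra_simps)
    qed
    finally show ?thesis .
  qed
qed


lemma Ex_add: "Ex n M (\<lambda>y. f y + g y) = Ex n M f + Ex n M g"
  unfolding Ex_def by (simp add: algebra_simps sum.distrib)

lemma en_ge1: "exp 1 * real n \<ge> 1"
proof -
  have "exp 1 \<ge> (1::real)" by simp
  moreover have "real n \<ge> 1" using n_ge4 by simp
  ultimately show ?thesis by (metis mult_mono' mult_1_right zero_le_one order_trans)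
qed

lemma EZ_bound: "Ex n (single n r t) (gb n r 0) \<le> (1 - 1 / (exp 1 * real n)) ^ t * real n"
proof -
  have c: "0 \<le> 1 - 1 / (exp 1 * real n)" using en_ge1 by simp
  have "Ex n (single n r t) (gb n r 0) \<le> (1 - 1 / (exp 1 * real n)) ^ (t - 0) * Ex n (single n r 0) (gb n r 0)"
    by (rule drift[OF r0 rn c drift_Z_step]) (auto intro: gb_nonneg[OF r0 rn])
  also have "Ex n (single n r 0) (gb n r 0) \<le> Ex n (single n r 0) (\<lambda>_. real n)"
    by (rule Ex_mono) (auto simp: gb_def[OF r0 rn])
  also have "\<dots> = real n" by (rule Ex_const[OF set_single[OF r0 rn]])
  finally show ?thesis using c by (simp add: mult_left_mono)
qed

lemma ppr_bounds: "0 \<le> ppr" "ppr \<le> 1"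
proof -
  have "exp 1 * real n ^ r \<ge> 1"
  proof -
    have "real n ^ r \<ge> 1" using n_ge4 by simp
    moreover have "exp 1 \<ge> (1::real)" by simp
    ultimately show ?thesis by (metis mult_mono' mult_1_right zero_le_one order_trans)
  qed
  then show "0 \<le> ppr" "ppr \<le> 1" unfolding ppr_def by auto
qed

lemma pu_le_Psi: "pu n r t \<le> Ex n (single n r t) (gb n r 1)"
proof -
  have "Ex n (single n r t) (gb n r 1) = (\<Sum>y\<in>NN n r. pmf (single n r t) y * gb n r 1 y)"
    unfolding Ex_def sum_split[OF r0 rn] by (simp add: gb_def[OF r0 rn])
  also have "\<dots> \<ge> (\<Sum>y\<in>NN n r. pmf (single n r t) y)"
  proof (rule sum_mono)
    fix y assume "y \<in> NN n r"
    then have "gb n r 1 y \<ge> 1" unfolding NN_def[OF r0 rn] by (auto simp: gb_def[OF r0 rn])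
    then show "pmf (single n r t) y \<le> pmf (single n r t) y * gb n r 1 y"
      by (metis mult_left_mono mult_1_right pmf_nonneg)
  qed
  finally show ?thesis using pu_sum[OF r0 rn] by simp
qed

lemma pu_bound:
  assumes "s \<le> t"
  shows "pu n r t \<le> (1 - ppr) ^ (t - s) * (1 + real n * (1 - 1 / (exp 1 * real n)) ^ s)"
proof -
  have c: "0 \<le> 1 - ppr" using ppr_bounds by simp
  have "pu n r t \<le> Ex n (single n r t) (gb n r 1)" by (rule pu_le_Psi)
  also have "\<dots> \<le> (1 - ppr) ^ (t - s) * Ex n (single n r s) (gb n r 1)"
    by (rule drift[OF r0 rn c drift_Psi_step _ assms]) (auto intro: gb_nonneg[OF r0 rn])
  also have "Ex n (single n r s) (gb n r 1) \<le> Ex n (single n r s) (\<lambda>y. 1 + gb n r 0 y)"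
    by (rule Ex_mono) (auto simp: gb_def[OF r0 rn])
  also have "\<dots> = 1 + Ex n (single n r s) (gb n r 0)"
    by (simp add: Ex_add Ex_const[OF set_single[OF r0 rn]])
  also have "\<dots> \<le> 1 + real n * (1 - 1 / (exp 1 * real n)) ^ s"
    using EZ_bound[of s] by (simp add: mult.commute)
  finally show ?thesis using c by (simp add: mult_left_mono)
qed

definition "qq = 1 / (exp 1 * real n ^ (2 * r))"

lemma qq_bounds: "0 \<le> qq" "qq \<le> KK n r"
  using KK_ge unfolding qq_def by auto

lemma A3: "s \<le> t \<Longrightarrow> 1 - po n r t \<le> (1 - qq) ^ (t - s) / 2 + pu n r s"
  by (rule B3[OF r0 rn qq_bounds])

lemma A2: "1 - po n r t \<le> (1 + pu n r t) / 2"
  by (rule a_le_half[OF r0 rn])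

end


lemma set_indep_list: "xs \<in> set_pmf (indep_list ps) \<Longrightarrow> list_all2 (\<lambda>x p. x \<in> set_pmf p) xs ps"
  by (induction ps arbitrary: xs) auto

lemma indep_list_Cons_pair: "indep_list (p # ps) = map_pmf (\<lambda>(x, xs). x # xs) (pair_pmf p (indep_list ps))"
  by (simp add: pair_pmf_def map_pmf_def bind_assoc_pmf bind_return_pmf)

lemma indep_bind:
  "bind_pmf (indep_list ps) (\<lambda>xs. indep_list (map f xs)) = indep_list (map (\<lambda>p. bind_pmf p f) ps)"
proof (induction ps)
  case Nil then show ?case by (simp add: bind_return_pmf)
next
  case (Cons p ps)
  have "bind_pmf (indep_list (p # ps)) (\<lambda>xs. indep_list (map f xs))
      = bind_pmf p (\<lambda>x. bind_pmf (indep_list ps) (\<lambda>xs. bind_pmf (f x) (\<lambda>y. bind_pmf (indep_list (map f xs)) (\<lambda>ys. return_pmf (y # ys)))))"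
    by (simp add: bind_assoc_pmf bind_return_pmf)
  also have "\<dots> = bind_pmf p (\<lambda>x. bind_pmf (f x) (\<lambda>y. bind_pmf (bind_pmf (indep_list ps) (\<lambda>xs. indep_list (map f xs))) (\<lambda>ys. return_pmf (y # ys))))"
    by (simp add: bind_assoc_pmf bind_commute_pmf[of "indep_list ps"])
  also have "\<dots> = indep_list (map (\<lambda>p. bind_pmf p f) (p # ps))"
    by (simp add: Cons.IH bind_assoc_pmf)
  finally show ?case .
qed

lemma prob_indep_all:
  fixes ps :: "'a::countable pmf list"
  shows "measure_pmf.prob (indep_list ps) {xs. \<forall>x\<in>set xs. P x} = prod_list (map (\<lambda>p. measure_pmf.prob p {x. P x}) ps)"
proof (induction ps)
  case Nil then show ?case by simp
next
  case (Cons p ps)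
  have pre: "(\<lambda>(x, xs). x # xs) -` {xs. \<forall>x\<in>set xs. P x} = {x. P x} \<times> {xs. \<forall>x\<in>set xs. P x}"
    by auto
  show ?case
    unfolding indep_list_Cons_pair measure_map_pmf pre
    using Cons by (simp add: measure_pmf_prob_product[OF countableI_type countableI_type])
qed

fun VV :: "nat \<Rightarrow> nat \<Rightarrow> nat \<Rightarrow> nat \<Rightarrow> bool list list pmf" where
  "VV n r lam 0 = islands_init n lam"
| "VV n r lam (Suc t) = bind_pmf (VV n r lam t) (\<lambda>xs. indep_list (map (ea_step n r) xs))"

lemma VV_eq: "VV n r lam t = indep_list (replicate lam (single n r t))"
proof (induction t)
  case 0 then show ?case by (simp add: islands_init_def Ln_def)
next
  case (Suc t)
  show ?case by (simp add: Suc indep_bind map_replicate)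
qed

definition gopt :: "nat \<Rightarrow> nat \<Rightarrow> bool list list \<Rightarrow> bool list list option" where
  "gopt n r xs = (if has_opt n r xs then None else Some xs)"

context
  fixes n r :: nat
  assumes r2: "2 \<le> r" and rn: "2 * r \<le> n"
begin

lemma r0': "0 < r" using r2 by simp

definition "HH xs = map_pmf (gopt n r) (indep_list (map (ea_step n r) xs))"

lemma HH_opt: "has_opt n r xs \<Longrightarrow> HH xs = return_pmf None"
proof -
  assume h: "has_opt n r xs"
  have "\<And>ys. ys \<in> set_pmf (indep_list (map (ea_step n r) xs)) \<Longrightarrow> has_opt n r ys"
  proof -
    fix ys assume "ys \<in> set_pmf (indep_list (map (ea_step n r) xs))"
    then have la: "list_all2 (\<lambda>x p. x \<in> set_pmf p) ys (map (ea_step n r) xs)" by (rule set_indep_list)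
    from h obtain i where i: "i < length xs" "xs ! i = fork_opt n r"
      unfolding has_opt_def by (metis in_set_conv_nth)
    have "ys ! i \<in> set_pmf (ea_step n r (xs ! i))" "i < length ys"
      using la i list_all2_nthD list_all2_lengthD by fastforce+
    then have "ys ! i = fork_opt n r" using i ea_opt[OF r0' rn] by simp
    then show "has_opt n r ys" unfolding has_opt_def using \<open>i < length ys\<close> by (metis nth_mem)
  qed
  then have "map_pmf (gopt n r) (indep_list (map (ea_step n r) xs)) = map_pmf (\<lambda>_. None) (indep_list (map (ea_step n r) xs))"
    by (intro map_pmf_cong) (auto simp: gopt_def)
  then show ?thesis unfolding HH_def by (simp add: map_pmf_const)
qed

definition "HH' z = (case z of None \<Rightarrow> return_pmf None | Some xs \<Rightarrow> HH xs)"

lemma HH_factor0: "HH xs = HH' (gopt n r xs)"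
  by (simp add: HH'_def gopt_def HH_opt)

lemma HH_factor: "HH = (\<lambda>xs. HH' (gopt n r xs))"
  using HH_factor0 by auto

lemma islands_map: "map_pmf (gopt n r) (islands_state n r lam t) = map_pmf (gopt n r) (VV n r lam t)"
proof (induction t)
  case 0 then show ?case by simp
next
  case (Suc t)
  have A: "map_pmf (gopt n r) (islands_state n r lam (Suc t)) = bind_pmf (islands_state n r lam t) HH"
  proof -
    have "map_pmf (gopt n r) (islands_step n r xs) = HH xs" for xs
    proof (cases "has_opt n r xs")
      case True
      then show ?thesis using HH_opt[OF True] by (simp add: islands_step_def gopt_def)
    next
      case False
      then show ?thesis by (simp add: islands_step_def HH_def)
    qed
    then show ?thesis by (simp add: map_bind_pmf)
  qed
  have B: "map_pmf (gopt n r) (VV n r lam (Suc t)) = bind_pmf (VV n r lam t) HH"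
    by (simp add: map_bind_pmf) (simp add: HH_def[abs_def])
  have "bind_pmf (islands_state n r lam t) HH = bind_pmf (map_pmf (gopt n r) (islands_state n r lam t)) HH'"
    by (simp add: bind_map_pmf HH_factor)
  also have "\<dots> = bind_pmf (map_pmf (gopt n r) (VV n r lam t)) HH'" by (simp add: Suc)
  also have "\<dots> = bind_pmf (VV n r lam t) HH"
    by (simp add: bind_map_pmf HH_factor)
  finally show ?case using A B by simp
qed

lemma prob_not_opt: "measure_pmf.prob (islands_state n r lam t) {xs. \<not> has_opt n r xs} = (1 - po n r t) ^ lam"
proof -
  have pre: "{xs. \<not> has_opt n r xs} = gopt n r -` range Some"
    by (auto simp: gopt_def)
  have "measure_pmf.prob (islands_state n r lam t) {xs. \<not> has_opt n r xs}
      = measure_pmf.prob (map_pmf (gopt n r) (islands_state n r lam t)) (range Some)"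
    by (simp add: measure_map_pmf pre)
  also have "\<dots> = measure_pmf.prob (map_pmf (gopt n r) (VV n r lam t)) (range Some)"
    by (simp add: islands_map)
  also have "\<dots> = measure_pmf.prob (VV n r lam t) {xs. \<forall>x\<in>set xs. x \<noteq> fork_opt n r}"
  proof -
    have "gopt n r -` range Some = {xs. \<forall>x\<in>set xs. x \<noteq> fork_opt n r}"
      by (auto simp: gopt_def has_opt_def)
    then show ?thesis by (simp add: measure_map_pmf)
  qed
  also have "\<dots> = (measure_pmf.prob (single n r t) {x. x \<noteq> fork_opt n r}) ^ lam"
    by (simp add: VV_eq prob_indep_all prod_list_replicate)
  also have "measure_pmf.prob (single n r t) {x. x \<noteq> fork_opt n r} = 1 - po n r t"
  proof -
    have "{x. x \<noteq> fork_opt n r} = UNIV - {fork_opt n r}" by auto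
    then show ?thesis
      using measure_pmf.prob_compl[of "{fork_opt n r}" "single n r t"]
      by (simp add: measure_pmf_single po_def[OF r0' rn])
  qed
  finally show ?thesis .
qed

lemma expected_T_eq: "expected_T n r lam = (\<Sum>t. ennreal ((1 - po n r t) ^ lam))"
  unfolding expected_T_def prob_not_opt ..

end


lemma h_exp_lin: "0 \<le> (x::real) \<Longrightarrow> x \<le> 3 \<Longrightarrow> exp (-x) \<le> 1 - x / 4"
proof -
  assume x: "0 \<le> x" "x \<le> 3"
  have "exp (-x) = inverse (exp x)" by (simp add: exp_minus)
  also have "\<dots> \<le> inverse (1 + x)"
    using x by (intro le_imp_inverse_le) (auto simp: add.commute)
  also have "\<dots> \<le> 1 - x / 4"
  proof -
    have e: "(1 - x / 4) * (1 + x) = 1 + x * (3 - x) / 4" by (simp add: field_simps)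
    have "0 \<le> x * (3 - x)" using x by simp
    then have "(1 - x / 4) * (1 + x) \<ge> 1" unfolding e by simp
    then show ?thesis using x by (simp add: field_simps)
  qed
  finally show ?thesis .
qed

lemma h_exp_small: "3 \<le> (x::real) \<Longrightarrow> exp (-x) \<le> 1 / 4"
proof -
  assume x: "3 \<le> x"
  have "4 \<le> exp x" using exp_ge_add_one_self[of x] x by linarith
  then show ?thesis by (simp add: exp_minus field_simps)
qed

lemma h_pow_exp: "0 \<le> (b::real) \<Longrightarrow> b \<le> exp y \<Longrightarrow> b ^ k \<le> exp (real k * y)"
  by (simp add: exp_of_nat_mult power_mono)

lemma h_one_plus: "(b::real) \<le> 1 + y \<Longrightarrow> 0 \<le> b \<Longrightarrow> b ^ k \<le> exp (real k * y)"
  using h_pow_exp[of b y k] exp_ge_add_one_self[of y] by (simp add: add.commute)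

lemma h_sq_exp: "(x::real) \<ge> 0 \<Longrightarrow> x ^ 2 * exp (- x / 3) \<le> 36"
proof -
  assume x: "x \<ge> 0"
  have "x / 6 \<le> exp (x / 6)" using exp_ge_add_one_self[of "x/6"] by linarith
  then have "(x / 6) ^ 2 \<le> exp (x / 6) ^ 2" using x by (intro power_mono) auto
  also have "\<dots> = exp (x / 3)" by (simp add: exp_of_nat_mult[symmetric])
  finally have "x ^ 2 \<le> 36 * exp (x / 3)" by (simp add: power_divide)
  then show ?thesis by (simp add: exp_minus field_simps)
qed

lemma h_geo_inv: "(y::real) > 0 \<Longrightarrow> 1 / (1 - exp (- y)) \<le> 1 + 1 / y"
proof -
  assume y: "y > 0"
  have "exp (-y) \<le> 1 / (1 + y)"
    using exp_ge_add_one_self[of y] y by (simp add: exp_minus field_simps add.commute)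
  then have "1 - exp (-y) \<ge> y / (1 + y)" using y by (simp add: field_simps)
  moreover have "y / (1 + y) > 0" using y by simp
  ultimately have "1 / (1 - exp (-y)) \<le> 1 / (y / (1 + y))"
  proof -
    assume A: "1 - exp (-y) \<ge> y / (1 + y)" and B: "y / (1 + y) > 0"
    have "0 < (1 - exp (-y)) * (y / (1 + y))" using A B y by (intro mult_pos_pos) auto
    then show ?thesis using A y by (intro divide_left_mono) auto
  qed
  also have "\<dots> = 1 + 1 / y" using y by (simp add: field_simps)
  finally show ?thesis .
qed

lemma h_geo_sum: "0 \<le> (x::real) \<Longrightarrow> x < 1 \<Longrightarrow> (\<Sum>i<M. x ^ i) \<le> 1 / (1 - x)"
  by (simp add: sum_gp_strict divide_right_mono)

lemma h_shift: "(\<Sum>t<(N::nat). (if T0 \<le> t then f (t - T0) else (0::real))) = (\<Sum>j<N - T0. f j)"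
proof (induction N)
  case 0 then show ?case by simp
next
  case (Suc N)
  show ?case
  proof (cases "T0 \<le> N")
    case True
    then have "Suc N - T0 = Suc (N - T0)" by simp
    then show ?thesis using Suc True by simp
  next
    case False
    then have "Suc N - T0 = 0" by simp
    then show ?thesis using Suc False by simp
  qed
qed

lemma h_div2: "(\<And>k::nat. g k \<ge> (0::real)) \<Longrightarrow> (\<Sum>t<N. g (t div 2)) \<le> 2 * (\<Sum>k<N. g k)"
proof -
  assume g: "\<And>k. g k \<ge> 0"
  have eq: "(\<Sum>t<2 * M. g (t div 2)) = 2 * (\<Sum>k<M. g k)" for M :: nat
    by (induction M) (auto simp: algebra_simps)
  have "(\<Sum>t<N. g (t div 2)) \<le> (\<Sum>t<2 * N. g (t div 2))"
    by (rule sum_mono2) (auto simp: g)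
  also have "\<dots> = 2 * (\<Sum>k<N. g k)" by (rule eq)
  finally show ?thesis .
qed

lemma h_count: "(p::real) > 0 \<Longrightarrow> L \<ge> 0 \<Longrightarrow> (\<Sum>j<M. (if p * real j \<le> L then 1 else (0::real))) \<le> L / p + 1"
proof -
  assume p: "p > 0" and L: "L \<ge> 0"
  have "(\<Sum>j<M. (if p * real j \<le> L then 1 else (0::real))) = real (card {j\<in>{..<M}. p * real j \<le> L})"
  proof -
    have "{..<M} \<inter> {j. p * real j \<le> L} = {j\<in>{..<M}. p * real j \<le> L}" by auto
    then show ?thesis by (simp add: sum.If_cases)
  qed
  also have "card {j\<in>{..<M}. p * real j \<le> L} \<le> card {..nat \<lfloor>L / p\<rfloor>}"
  proof (rule card_mono)
    show "{j \<in> {..<M}. p * real j \<le> L} \<subseteq> {..nat \<lfloor>L / p\<rfloor>}"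
    proof
      fix j assume "j \<in> {j \<in> {..<M}. p * real j \<le> L}"
      then have "real j \<le> L / p" using p by (simp add: field_simps mult.commute)
      then show "j \<in> {..nat \<lfloor>L / p\<rfloor>}" by (simp add: le_nat_floor)
    qed
  qed simp
  then have "real (card {j\<in>{..<M}. p * real j \<le> L}) \<le> real (nat \<lfloor>L / p\<rfloor>) + 1" by simp
  also have "real (nat \<lfloor>L / p\<rfloor>) \<le> L / p" using p L by simp
  finally show ?thesis by simp
qed

lemma h_bern: "0 \<le> (q::real) \<Longrightarrow> real k * q \<le> 1 \<Longrightarrow> 1 - (1 - q) ^ k \<ge> real k * q / 2"
proof -
  assume q: "0 \<le> q" and kq: "real k * q \<le> 1"
  show ?thesis
  proof (cases "q \<le> 1")
    case False
    have "k = 0"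
    proof (rule ccontr)
      assume "k \<noteq> 0"
      then have "real k \<ge> 1" by simp
      then have "1 * q \<le> real k * q" using q by (intro mult_right_mono) auto
      then show False using kq False by linarith
    qed
    then show ?thesis by simp
  next
    case True
    have "1 + real k * q \<le> (1 + q) ^ k" using Bernoulli_inequality[of q k] q by simp
    moreover have "(1 - q) ^ k * (1 + q) ^ k \<le> 1"
    proof -
      have "(1 - q) ^ k * (1 + q) ^ k = (1 - q * q) ^ k" by (simp add: power_mult_distrib[symmetric] algebra_simps)
      also have "\<dots> \<le> 1" using q True by (intro power_le_one) (auto simp: mult_le_one)
      finally show ?thesis .
    qed
    moreover have "(1 - q) ^ k \<ge> 0" using True by simp
    ultimately have "(1 - q) ^ k * (1 + real k * q) \<le> 1"
      by (meson mult_left_mono order_trans)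
    moreover have pos: "1 + real k * q > 0" using q by (simp add: add_pos_nonneg)
    ultimately have "(1 - q) ^ k \<le> 1 / (1 + real k * q)" by (simp add: pos_le_divide_eq[OF pos])
    moreover have "1 / (1 + real k * q) \<le> 1 - real k * q / 2"
    proof -
      define z where "z = real k * q"
      have e: "(1 - z / 2) * (1 + z) = 1 + z * (1 - z) / 2" by (simp add: field_simps)
      have "0 \<le> z * (1 - z)" using kq q by (simp add: z_def)
      then have "(1 - z / 2) * (1 + z) \<ge> 1" unfolding e by simp
      then have h: "1 \<le> (1 - real k * q / 2) * (1 + real k * q)" by (simp add: z_def)
      have pos2: "0 < 1 + real k * q" using q by (simp add: add_pos_nonneg)
      show ?thesis using h by (simp only: pos_divide_le_eq[OF pos2])
    qed
    ultimately show ?thesis by linarith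
  qed
qed


context
  fixes n r lam :: nat and a u :: "nat \<Rightarrow> real" and p q d :: real
  assumes r2: "2 \<le> r" and n4: "4 \<le> n" and lam1: "1 \<le> lam" and lamn: "lam \<le> n ^ r"
    and p_def: "p = 1 / (exp 1 * real n ^ r)"
    and q_def: "q = 1 / (exp 1 * real n ^ (2 * r))"
    and d_def: "d = 1 / (exp 1 * real n)"
    and a0: "\<And>t. 0 \<le> a t" and a1: "\<And>t. a t \<le> 1"
    and H2: "\<And>t. a t \<le> (1 + u t) / 2"
    and H3: "\<And>s t. s \<le> t \<Longrightarrow> a t \<le> (1 - q) ^ (t - s) / 2 + u s"
    and H4: "\<And>s t. s \<le> t \<Longrightarrow> u t \<le> (1 - p) ^ (t - s) * (1 + real n * (1 - d) ^ s)"
begin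

lemma nr_ge: "real n ^ r \<ge> 16"
proof -
  have "real n ^ r \<ge> real n ^ 2" using n4 r2 by (intro power_increasing) auto
  moreover have "real n ^ 2 \<ge> 4 ^ 2" using n4 by (intro power_mono) auto
  ultimately show ?thesis by simp
qed

lemma npos: "real n > 0" using n4 by simp
lemma nrpos: "real n ^ r > 0" using n4 by simp
lemma lampos: "real lam > 0" using lam1 by simp
lemma e_pos: "exp 1 > (0::real)" by simp

lemma p_pos: "p > 0" unfolding p_def using nrpos by simp
lemma q_pos: "q > 0" unfolding q_def using n4 by simp
lemma d_pos: "d > 0" unfolding d_def using npos by simp

lemma p_small: "p \<le> 1 / 16"
proof -
  have "exp 1 * real n ^ r \<ge> 1 * 16" using nr_ge by (intro mult_mono) auto
  then show ?thesis unfolding p_def by (simp add: field_simps)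
qed

lemma d_le1: "d \<le> 1"
proof -
  have "exp 1 * real n \<ge> 1 * 4" using n4 by (intro mult_mono) auto
  then show ?thesis unfolding d_def by (simp add: field_simps)
qed

lemma q_le: "q \<le> p / 2"
proof -
  have "real n ^ (2 * r) = real n ^ r * real n ^ r" by (simp add: power_add[symmetric] mult_2)
  also have "\<dots> \<ge> real n ^ r * 2" using nr_ge nrpos by (intro mult_left_mono) auto
  finally have "exp 1 * real n ^ (2 * r) \<ge> exp 1 * (real n ^ r * 2)" by (intro mult_left_mono) auto
  then have "1 / (exp 1 * real n ^ (2 * r)) \<le> 1 / (exp 1 * (real n ^ r * 2))"
    using nrpos by (intro divide_left_mono) auto
  then show ?thesis unfolding p_def q_def by (simp add: field_simps)
qed

lemma lamq: "real lam * q \<le> 1"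
proof -
  have "real n ^ (2 * r) = real n ^ r * real n ^ r" by (simp add: power_add[symmetric] mult_2)
  have "real lam \<le> real n ^ r" using lamn by (metis of_nat_le_iff of_nat_power)
  also have "\<dots> \<le> exp 1 * real n ^ (2 * r)"
  proof -
    have "real n ^ r * 1 \<le> real n ^ r * real n ^ r" using nr_ge by (intro mult_left_mono) auto
    also have "\<dots> = real n ^ (2 * r)" by (simp add: power_add[symmetric] mult_2)
    also have "\<dots> \<le> exp 1 * real n ^ (2 * r)" using nrpos by simp
    finally show ?thesis by simp
  qed
  finally show ?thesis unfolding q_def using nrpos by (simp add: field_simps)
qed

definition "eps = 1 / real n ^ (r + 1)"
definition "T0 = nat \<lceil>real (r + 2) * exp 1 * real n * ln (real n)\<rceil>"

lemma eps_nonneg: "eps \<ge> 0" unfolding eps_def by simp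

lemma lam_le: "real lam \<le> real n ^ r" using lamn by (metis of_nat_le_iff of_nat_power)

lemma lam_eps: "real lam * eps \<le> 1"
proof -
  have "real lam * eps \<le> real n ^ r * eps"
    using lam_le eps_nonneg by (intro mult_right_mono) auto
  also have "\<dots> = 1 / real n" unfolding eps_def using npos by (simp add: field_simps)
  also have "\<dots> \<le> 1" using n4 by simp
  finally show ?thesis .
qed

lemma eps_small: "eps \<le> 1 / 64"
proof -
  have "real n ^ (r + 1) \<ge> real n ^ 3" using n4 r2 by (intro power_increasing) auto
  moreover have "real n ^ 3 \<ge> 4 ^ 3" using n4 by (intro power_mono) auto
  ultimately have "real n ^ (r + 1) \<ge> 64" by simp
  then show ?thesis unfolding eps_def by (simp add: field_simps)
qed


lemma pow_exp: "0 \<le> x \<Longrightarrow> x \<le> 1 \<Longrightarrow> (1 - x) ^ k \<le> exp (- (x * real k))"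
proof -
  assume "0 \<le> x" "x \<le> 1"
  have "1 - x \<le> exp (- x)" using exp_ge_add_one_self[of "-x"] by simp
  then have "(1 - x) ^ k \<le> exp (- x) ^ k" using \<open>x \<le> 1\<close> by (intro power_mono) auto
  also have "\<dots> = exp (- (x * real k))" by (simp add: exp_of_nat_mult[symmetric] mult.commute)
  finally show ?thesis .
qed

lemma S1: "real n * (1 - d) ^ T0 \<le> eps"
proof -
  have "(1 - d) ^ T0 \<le> exp (- (d * real T0))" using pow_exp d_pos d_le1 by auto
  also have "\<dots> \<le> exp (- (real (r + 2) * ln (real n)))"
  proof -
    have "real T0 \<ge> real (r + 2) * exp 1 * real n * ln (real n)"
      unfolding T0_def by linarith
    then have "d * real T0 \<ge> d * (real (r + 2) * exp 1 * real n * ln (real n))"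
      using d_pos by (intro mult_left_mono) auto
    also have "d * (real (r + 2) * exp 1 * real n * ln (real n)) = real (r + 2) * ln (real n)"
      unfolding d_def using npos by (simp add: field_simps)
    finally show ?thesis by simp
  qed
  also have "\<dots> = 1 / real n ^ (r + 2)"
  proof -
    have "exp (real (r + 2) * ln (real n)) = real n ^ (r + 2)"
      by (simp only: exp_of_nat_mult exp_ln[OF npos])
    then show ?thesis by (simp add: exp_minus divide_inverse)
  qed
  finally have "real n * (1 - d) ^ T0 \<le> real n * (1 / real n ^ (r + 2))"
    using npos by (intro mult_left_mono) auto
  also have "\<dots> = eps" unfolding eps_def using npos by (simp add: field_simps)
  finally show ?thesis .
qed

lemma S2: "T0 \<le> t \<Longrightarrow> a t \<le> (1 + exp (- (p * real (t - T0))) + eps) / 2"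
proof -
  assume t: "T0 \<le> t"
  have "u t \<le> (1 - p) ^ (t - T0) * (1 + real n * (1 - d) ^ T0)" by (rule H4[OF t])
  also have "\<dots> \<le> exp (- (p * real (t - T0))) * (1 + eps)"
  proof -
    have "0 \<le> (1 - d) ^ T0" using d_le1 by simp
    then have "0 \<le> 1 + real n * (1 - d) ^ T0" by simp
    then show ?thesis using pow_exp[of p "t - T0"] p_pos p_small S1 by (intro mult_mono) auto
  qed
  also have "\<dots> \<le> exp (- (p * real (t - T0))) + eps"
  proof -
    have "exp (- (p * real (t - T0))) \<le> 1" using p_pos by simp
    then have "exp (- (p * real (t - T0))) * eps \<le> 1 * eps" using eps_nonneg by (intro mult_right_mono) auto
    then show ?thesis by (simp add: algebra_simps)
  qed
  finally show ?thesis using H2[of t] by simp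
qed


lemma S3:
  assumes t: "T0 \<le> t"
  shows "a t ^ lam \<le> exp 1 * exp (- (real lam * (p * real (t - T0)) / 8))
           + (if p * real (t - T0) \<le> ln (real lam) then exp (- real lam / 3) else 0)
           + exp 2 / 2 ^ lam"
proof -
  define x where "x = p * real (t - T0)"
  have x0: "x \<ge> 0" unfolding x_def using p_pos by simp
  have A: "a t \<le> (1 + exp (- x) + eps) / 2" using S2[OF t] unfolding x_def .
  have T1: "0 \<le> exp 1 * exp (- (real lam * x / 8))" by simp
  have T2: "0 \<le> (if x \<le> ln (real lam) then exp (- real lam / 3) else 0)" by simp
  have T3: "0 \<le> exp 2 / (2::real) ^ lam" by simp
  consider (c1) "x \<le> 3" | (c2) "x > 3" "x \<le> ln (real lam)" | (c3) "x > ln (real lam)" by linarith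
  then have "a t ^ lam \<le> exp 1 * exp (- (real lam * x / 8))
           + (if x \<le> ln (real lam) then exp (- real lam / 3) else 0) + exp 2 / 2 ^ lam"
  proof cases
    case c1
    have "a t \<le> 1 + (- x / 8 + eps / 2)" using A h_exp_lin[OF x0 c1] by simp
    then have "a t ^ lam \<le> exp (real lam * (- x / 8 + eps / 2))" by (rule h_one_plus) (rule a0)
    also have "\<dots> = exp (- (real lam * x / 8)) * exp (real lam * eps / 2)"
      by (simp add: algebra_simps exp_add[symmetric])
    also have "\<dots> \<le> exp (- (real lam * x / 8)) * exp 1"
      using lam_eps by (intro mult_left_mono) auto
    finally have X: "a t ^ lam \<le> exp 1 * exp (- (real lam * x / 8))" by (simp add: mult.commute)
    show ?thesis using X T2 T3 by linarith
  next
    case c2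
    have "exp (- x) \<le> 1 / 4" using h_exp_small c2 by simp
    then have "a t \<le> 2 / 3" using A eps_small by simp
    also have "\<dots> \<le> exp (- 1 / 3)" using exp_ge_add_one_self[of "-1/3"] by simp
    finally have "a t ^ lam \<le> exp (real lam * (- 1 / 3))" by (rule h_pow_exp[OF a0])
    then have X: "a t ^ lam \<le> exp (- real lam / 3)" by simp
    have "(if x \<le> ln (real lam) then exp (- real lam / 3) else 0) = exp (- real lam / 3)" using c2 by simp
    then show ?thesis using X T1 T3 by linarith
  next
    case c3
    have "exp (- x) < exp (- ln (real lam))" using c3 by simp
    also have "\<dots> = 1 / real lam" using lampos by (simp add: exp_minus divide_inverse)
    finally have ex: "real lam * exp (- x) \<le> 1" using lampos by (simp add: field_simps)
    have "2 * a t \<le> 1 + (exp (- x) + eps)" using A by simp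
    then have "(2 * a t) ^ lam \<le> exp (real lam * (exp (- x) + eps))"
      by (rule h_one_plus) (simp add: a0)
    also have "\<dots> \<le> exp 2" using ex lam_eps by (simp add: algebra_simps)
    finally have "2 ^ lam * a t ^ lam \<le> exp 2" by (simp add: power_mult_distrib)
    then have "a t ^ lam \<le> exp 2 / 2 ^ lam" by (simp add: field_simps)
    moreover have "(if x \<le> ln (real lam) then exp (- real lam / 3) else 0) = 0" using c3 by simp
    ultimately show ?thesis using T1 by linarith
  qed
  then show ?thesis unfolding x_def .
qed

definition "KB = nat \<lceil>2 / p * ln (2 * (real n + 1) * real lam)\<rceil>"

lemma S4:
  assumes t: "2 * KB \<le> t"
  shows "a t ^ lam \<le> exp 1 * (1 / 2) ^ lam * ((1 - q) ^ lam) ^ (t div 2)"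
proof -
  define s where "s = t div 2"
  have sK: "KB \<le> s" using t unfolding s_def by linarith
  have st: "s \<le> t" "s \<le> t - s" unfolding s_def by auto
  have q1: "0 \<le> 1 - q" "1 - q \<le> 1" using q_le p_small q_pos by auto
  have "a t \<le> (1 - q) ^ (t - s) / 2 + u s" by (rule H3[OF st(1)])
  also have "(1 - q) ^ (t - s) \<le> (1 - q) ^ s" using q1 st(2) by (intro power_decreasing) auto
  also have "u s \<le> (1 - p) ^ s * (1 + real n)" using H4[of 0 s] by simp
  also have "(1 - p) ^ s \<le> (1 - q) ^ s * exp (- (p / 2) * real s)"
  proof -
    have "1 - p \<le> (1 - q) * (1 - p / 2)"
    proof -
      have "(1 - q) * (1 - p / 2) = 1 - p / 2 - q + q * p / 2" by (simp add: field_simps)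
      moreover have "q * p / 2 \<ge> 0" using q_pos p_pos by simp
      ultimately show ?thesis using q_le by linarith
    qed
    also have "\<dots> \<le> (1 - q) * exp (- (p / 2))"
      using q1 exp_ge_add_one_self[of "- (p / 2)"] by (intro mult_left_mono) auto
    finally have "(1 - p) ^ s \<le> ((1 - q) * exp (- (p / 2))) ^ s"
      using p_small by (intro power_mono) auto
    also have "\<dots> = (1 - q) ^ s * exp (- (p / 2) * real s)"
      by (simp add: power_mult_distrib exp_of_nat_mult[symmetric] mult.commute)
    finally show ?thesis .
  qed
  also have "exp (- (p / 2) * real s) \<le> 1 / (2 * (real n + 1) * real lam)"
  proof -
    have pos: "2 * (real n + 1) * real lam > 0" using lampos by simp
    have "real KB \<ge> 2 / p * ln (2 * (real n + 1) * real lam)" unfolding KB_def by linarith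
    then have "real s \<ge> 2 / p * ln (2 * (real n + 1) * real lam)" using sK by linarith
    then have "p / 2 * real s \<ge> p / 2 * (2 / p * ln (2 * (real n + 1) * real lam))"
      using p_pos by (intro mult_left_mono) auto
    also have "p / 2 * (2 / p * ln (2 * (real n + 1) * real lam)) = ln (2 * (real n + 1) * real lam)"
      using p_pos by simp
    finally have "exp (- (p / 2) * real s) \<le> exp (- ln (2 * (real n + 1) * real lam))" by simp
    also have "\<dots> = 1 / (2 * (real n + 1) * real lam)" using pos by (simp add: exp_minus divide_inverse)
    finally show ?thesis .
  qed
  finally have "a t \<le> (1 - q) ^ s / 2 + (1 - q) ^ s * (1 / (2 * (real n + 1) * real lam)) * (1 + real n)"
    using q1 npos by (simp add: mult_right_mono mult_left_mono)
  also have "\<dots> = (1 - q) ^ s / 2 * (1 + 1 / real lam)"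
  proof -
    have ne: "real n + 1 \<noteq> 0" using npos by simp
    have "1 / (2 * (real n + 1) * real lam) * (1 + real n) = (real n + 1) / ((real n + 1) * (2 * real lam))"
      by (simp add: algebra_simps)
    also have "\<dots> = 1 / (2 * real lam)" using ne by simp
    finally have "1 / (2 * (real n + 1) * real lam) * (1 + real n) = 1 / (2 * real lam)" .
    then have "(1 - q) ^ s * (1 / (2 * (real n + 1) * real lam)) * (1 + real n) = (1 - q) ^ s * (1 / (2 * real lam))"
      by (simp only: mult.assoc)
    then show ?thesis by (simp add: algebra_simps)
  qed
  finally have at: "2 * a t \<le> (1 - q) ^ s * (1 + 1 / real lam)" by simp
  have "(2 * a t) ^ lam \<le> ((1 - q) ^ s * (1 + 1 / real lam)) ^ lam"
    using at a0 by (intro power_mono) auto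
  also have "\<dots> = ((1 - q) ^ lam) ^ s * (1 + 1 / real lam) ^ lam"
    by (simp add: power_mult_distrib power_mult[symmetric] mult.commute)
  also have "(1 + 1 / real lam) ^ lam \<le> exp (real lam * (1 / real lam))"
    by (rule h_one_plus) auto
  also have "exp (real lam * (1 / real lam)) = exp 1" using lampos by simp
  finally have "2 ^ lam * a t ^ lam \<le> ((1 - q) ^ lam) ^ s * exp 1"
    using q1 by (simp add: power_mult_distrib mult_left_mono)
  then show ?thesis unfolding s_def[symmetric] by (simp add: field_simps power_divide)
qed


definition "rho = exp (- (real lam * p / 8))"
definition "cc = (1 - q) ^ lam"
definition "gg j = (if p * real j \<le> ln (real lam) then exp (- real lam / 3) else (0::real))"
definition "FF t = (if t < T0 then 1 else 0) + (if T0 \<le> t then exp 1 * rho ^ (t - T0) else 0)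
   + (if T0 \<le> t then gg (t - T0) else 0) + (if t < 2 * KB then exp 2 / 2 ^ lam else 0)
   + exp 1 * (1 / 2) ^ lam * cc ^ (t div 2)"

lemma q1: "0 \<le> 1 - q" "1 - q \<le> 1" using q_le p_small q_pos by auto
lemma cc_bounds: "0 \<le> cc" "cc \<le> 1" unfolding cc_def using q1 by (auto intro: power_le_one)

lemma S5: "a t ^ lam \<le> FF t"
proof -
  have t1: "0 \<le> (if t < T0 then 1 else (0::real))" by simp
  have t2: "0 \<le> (if T0 \<le> t then exp 1 * rho ^ (t - T0) else 0)" unfolding rho_def by simp
  have t3: "0 \<le> (if T0 \<le> t then gg (t - T0) else 0)" unfolding gg_def by simp
  have t4: "0 \<le> (if t < 2 * KB then exp 2 / 2 ^ lam else (0::real))" by simp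
  have t5: "0 \<le> exp 1 * (1 / 2) ^ lam * cc ^ (t div 2)" using cc_bounds by simp
  consider (A) "t < T0" | (B) "T0 \<le> t" "t < 2 * KB" | (C) "T0 \<le> t" "2 * KB \<le> t" by linarith
  then show ?thesis
  proof cases
    case A
    have "a t ^ lam \<le> 1" using a0 a1 by (intro power_le_one) auto
    then show ?thesis unfolding FF_def using A t2 t3 t4 t5 by simp
  next
    case B
    have "exp (- (real lam * (p * real (t - T0)) / 8)) = rho ^ (t - T0)"
      unfolding rho_def by (simp add: exp_of_nat_mult[symmetric] algebra_simps)
    then have "a t ^ lam \<le> exp 1 * rho ^ (t - T0) + gg (t - T0) + exp 2 / 2 ^ lam"
      using S3[OF B(1)] unfolding gg_def by simp
    then show ?thesis unfolding FF_def using B t5 by simp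
  next
    case C
    have "a t ^ lam \<le> exp 1 * (1 / 2) ^ lam * cc ^ (t div 2)"
      using S4[OF C(2)] unfolding cc_def .
    then show ?thesis unfolding FF_def using C t1 t2 t3 t4 by simp
  qed
qed

lemma sum_ind_lt: "(\<Sum>t<N. (if t < M then c else (0::real))) \<le> real M * c" if "c \<ge> 0" for M N :: nat
proof -
  have "(\<Sum>t<N. (if t < M then c else (0::real))) = (\<Sum>t\<in>{..<N} \<inter> {..<M}. c)"
    by (simp add: sum.If_cases lessThan_def Int_def)
  also have "\<dots> = real (card ({..<N} \<inter> {..<M})) * c" by simp
  also have "\<dots> \<le> real M * c"
  proof -
    have "card ({..<N} \<inter> {..<M}) \<le> card {..<M}" by (rule card_mono) auto
    then show ?thesis using that by (intro mult_right_mono) auto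
  qed
  finally show ?thesis .
qed

lemma cc_lt: "1 - cc \<ge> real lam * q / 2"
  unfolding cc_def using h_bern[of q lam] q_pos lamq by simp

lemma S6: "(\<Sum>t<N. FF t) \<le> real T0 + exp 1 * (1 + 8 / (real lam * p))
   + exp (- real lam / 3) * (ln (real lam) / p + 1) + real (2 * KB) * (exp 2 / 2 ^ lam)
   + exp 1 * (1 / 2) ^ lam * (4 / (real lam * q))"
proof -
  have s1: "(\<Sum>t<N. (if t < T0 then 1 else (0::real))) \<le> real T0"
    using sum_ind_lt[of 1 T0 N] by simp
  have s2: "(\<Sum>t<N. (if T0 \<le> t then exp 1 * rho ^ (t - T0) else 0)) \<le> exp 1 * (1 + 8 / (real lam * p))"
  proof -
    have y: "real lam * p / 8 > 0" using lampos p_pos by simp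
    have r01: "0 \<le> rho" "rho < 1" unfolding rho_def using y by auto
    have "(\<Sum>t<N. (if T0 \<le> t then exp 1 * rho ^ (t - T0) else 0)) = (\<Sum>j<N - T0. exp 1 * rho ^ j)"
      by (rule h_shift)
    also have "\<dots> = exp 1 * (\<Sum>j<N - T0. rho ^ j)" by (simp add: sum_distrib_left)
    also have "\<dots> \<le> exp 1 * (1 / (1 - rho))" using h_geo_sum[OF r01] by (intro mult_left_mono) auto
    also have "1 / (1 - rho) \<le> 1 + 1 / (real lam * p / 8)"
      unfolding rho_def by (rule h_geo_inv[OF y])
    finally show ?thesis by (simp add: mult_left_mono)
  qed
  have s3: "(\<Sum>t<N. (if T0 \<le> t then gg (t - T0) else 0)) \<le> exp (- real lam / 3) * (ln (real lam) / p + 1)"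
  proof -
    have "(\<Sum>t<N. (if T0 \<le> t then gg (t - T0) else 0)) = (\<Sum>j<N - T0. gg j)" by (rule h_shift)
    also have "\<dots> = exp (- real lam / 3) * (\<Sum>j<N - T0. (if p * real j \<le> ln (real lam) then 1 else 0))"
      unfolding gg_def sum_distrib_left by (rule sum.cong) auto
    also have "\<dots> \<le> exp (- real lam / 3) * (ln (real lam) / p + 1)"
      using h_count[OF p_pos, of "ln (real lam)" "N - T0"] lam1 by (intro mult_left_mono) auto
    finally show ?thesis .
  qed
  have s4: "(\<Sum>t<N. (if t < 2 * KB then exp 2 / 2 ^ lam else (0::real))) \<le> real (2 * KB) * (exp 2 / 2 ^ lam)"
    by (rule sum_ind_lt) simp
  have s5: "(\<Sum>t<N. exp 1 * (1 / 2) ^ lam * cc ^ (t div 2)) \<le> exp 1 * (1 / 2) ^ lam * (4 / (real lam * q))"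
  proof -
    have cq: "real lam * q > 0" using lampos q_pos by simp
    have c1: "cc < 1" using cc_lt cq by linarith
    have "(\<Sum>t<N. cc ^ (t div 2)) \<le> 2 * (\<Sum>k<N. cc ^ k)"
      by (rule h_div2) (use cc_bounds in auto)
    also have "\<dots> \<le> 2 * (1 / (1 - cc))" using h_geo_sum[OF cc_bounds(1) c1, of N] by linarith
    also have "1 / (1 - cc) \<le> 1 / (real lam * q / 2)"
      using cc_lt cq by (intro divide_left_mono) auto
    finally have "(\<Sum>t<N. cc ^ (t div 2)) \<le> 4 / (real lam * q)" by simp
    then have "exp 1 * (1 / 2) ^ lam * (\<Sum>t<N. cc ^ (t div 2)) \<le> exp 1 * (1 / 2) ^ lam * (4 / (real lam * q))"
      by (intro mult_left_mono) auto
    then show ?thesis by (simp only: sum_distrib_left[symmetric])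
  qed
  have "(\<Sum>t<N. FF t) = (\<Sum>t<N. (if t < T0 then 1 else (0::real))) + (\<Sum>t<N. (if T0 \<le> t then exp 1 * rho ^ (t - T0) else 0))
     + (\<Sum>t<N. (if T0 \<le> t then gg (t - T0) else 0)) + (\<Sum>t<N. (if t < 2 * KB then exp 2 / 2 ^ lam else (0::real)))
     + (\<Sum>t<N. exp 1 * (1 / 2) ^ lam * cc ^ (t div 2))"
    unfolding FF_def by (simp add: sum.distrib)
  then show ?thesis using s1 s2 s3 s4 s5 by linarith
qed


lemma ln_n_ge1: "ln (real n) \<ge> 1"
proof -
  have "exp 1 \<le> real n" using exp_le n4 by simp
  then show ?thesis using npos by (metis exp_gt_zero ln_exp ln_le_cancel_iff)
qed

lemma ln_le_n: "ln (real n) \<le> real n"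
  using ln_le_minus_one[OF npos] by simp

lemma KL: "real n ^ r * ln (real n) / 2 ^ lam \<le> real n ^ (2 * r) / (real lam * 2 ^ lam) + real n * ln (real n)"
proof (cases "real lam * ln (real n) \<le> real n ^ r")
  case True
  have "real n ^ r * ln (real n) / 2 ^ lam = (real lam * ln (real n)) * real n ^ r / (real lam * 2 ^ lam)"
    using lampos by (simp add: field_simps)
  also have "\<dots> \<le> real n ^ r * real n ^ r / (real lam * 2 ^ lam)"
    using True nrpos lampos by (intro divide_right_mono mult_right_mono) auto
  also have "\<dots> = real n ^ (2 * r) / (real lam * 2 ^ lam)" by (simp add: power_add[symmetric] mult_2)
  finally have X: "real n ^ r * ln (real n) / 2 ^ lam \<le> real n ^ (2 * r) / (real lam * 2 ^ lam)" .
  have "0 \<le> real n * ln (real n)" using npos ln_n_ge1 by simp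
  then show ?thesis using X by linarith
next
  case False
  have l2: "real lam \<le> 2 ^ lam"
  proof -
    have "lam < 2 ^ lam" by (rule less_exp)
    then have "real lam < real (2 ^ lam)" by (simp only: of_nat_less_iff)
    then show ?thesis by simp
  qed
  have "real n ^ r * ln (real n) / 2 ^ lam \<le> real n ^ r * ln (real n) / real lam"
    using l2 lampos ln_n_ge1 nrpos by (intro divide_left_mono) auto
  also have "\<dots> \<le> (real lam * ln (real n)) * ln (real n) / real lam"
    using False ln_n_ge1 lampos by (intro divide_right_mono mult_right_mono) auto
  also have "\<dots> = ln (real n) * ln (real n)" using lampos by simp
  also have "\<dots> \<le> real n * ln (real n)" using ln_le_n ln_n_ge1 by (intro mult_right_mono) auto
  finally have "real n ^ r * ln (real n) / 2 ^ lam \<le> real n * ln (real n)" .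
  moreover have "real n ^ (2 * r) / (real lam * 2 ^ lam) \<ge> 0" by simp
  ultimately show ?thesis by linarith
qed

lemma K_le: "real KB \<le> 2 * exp 1 * real n ^ r * (real (r + 2) * ln (real n)) + 1"
proof -
  have pos: "2 * (real n + 1) * real lam > 0" using lampos by simp
  have "2 * (real n + 1) * real lam \<le> 2 * (real n + 1) * real n ^ r"
    using lam_le by (intro mult_left_mono) auto
  also have "\<dots> \<le> real n ^ 2 * real n ^ r"
  proof -
    have "4 * real n \<le> real n * real n" using n4 by (intro mult_right_mono) auto
    moreover have "2 * (real n + 1) \<le> 4 * real n" using n4 by simp
    ultimately have "2 * (real n + 1) \<le> real n * real n" by (rule order_trans[rotated])
    then have "2 * (real n + 1) \<le> real n ^ 2" by (simp add: power2_eq_square)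
    then show ?thesis using nrpos by (intro mult_right_mono) auto
  qed
  also have "\<dots> = real n ^ (r + 2)" by (metis power_add add.commute)
  finally have "ln (2 * (real n + 1) * real lam) \<le> ln (real n ^ (r + 2))" using pos by simp
  also have "\<dots> = real (r + 2) * ln (real n)" using npos by (simp only: ln_realpow)
  finally have L: "ln (2 * (real n + 1) * real lam) \<le> real (r + 2) * ln (real n)" .
  have "real KB \<le> 2 / p * ln (2 * (real n + 1) * real lam) + 1"
  proof -
    have "1 * 1 \<le> (2 * (real n + 1)) * real lam" using lam1 by (intro mult_mono) auto
    then have "ln (2 * (real n + 1) * real lam) \<ge> 0" by simp
    then have "2 / p * ln (2 * (real n + 1) * real lam) \<ge> 0" using p_pos by simp
    then show ?thesis unfolding KB_def by linarith
  qed
  also have "2 / p = 2 * exp 1 * real n ^ r" unfolding p_def by simp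
  finally have K1: "real KB \<le> 2 * exp 1 * real n ^ r * ln (2 * (real n + 1) * real lam) + 1" .
  have "2 * exp 1 * real n ^ r * ln (2 * (real n + 1) * real lam) \<le> 2 * exp 1 * real n ^ r * (real (r + 2) * ln (real n))"
    using L nrpos by (intro mult_left_mono) auto
  then show ?thesis using K1 by linarith
qed


lemma S7: "(\<Sum>t<N. a t ^ lam) \<le> 120 * real (r + 2) *
    (real n * ln (real n) + real n ^ (2 * r) / (real lam * 2 ^ lam) + real n ^ r / real lam)"
proof -
  define Lg where "Lg = real n * ln (real n)"
  define W where "W = real n ^ (2 * r) / (real lam * 2 ^ lam)"
  define V where "V = real n ^ r / real lam"
  define R where "R = real (r + 2)"
  have e3: "exp 1 \<le> (3::real)" by (rule exp_le)
  have e0: "exp 1 \<ge> (0::real)" by simp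
  have Lg1: "Lg \<ge> 1"
  proof -
    have "1 * 1 \<le> real n * ln (real n)" using ln_n_ge1 n4 by (intro mult_mono) auto
    then show ?thesis unfolding Lg_def by simp
  qed
  have W0: "W \<ge> 0" unfolding W_def by simp
  have V0: "V \<ge> 0" unfolding V_def by simp
  have R4: "R \<ge> 4" unfolding R_def using r2 by simp
  have lnn0: "ln (real n) \<ge> 0" using ln_n_ge1 by simp
  have "(\<Sum>t<N. a t ^ lam) \<le> (\<Sum>t<N. FF t)" by (rule sum_mono) (rule S5)
  also have "\<dots> \<le> real T0 + exp 1 * (1 + 8 / (real lam * p))
   + exp (- real lam / 3) * (ln (real lam) / p + 1) + real (2 * KB) * (exp 2 / 2 ^ lam)
   + exp 1 * (1 / 2) ^ lam * (4 / (real lam * q))" by (rule S6)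
  also have "\<dots> \<le> 120 * R * (Lg + W + V)"
  proof -
    have a: "real T0 \<le> 3 * R * Lg + Lg"
    proof -
      have X0: "real (r + 2) * exp 1 * real n * ln (real n) \<ge> 0" using lnn0 by simp
      have "real T0 \<le> real (r + 2) * exp 1 * real n * ln (real n) + 1"
        unfolding T0_def using X0 by linarith
      also have "real (r + 2) * exp 1 * real n * ln (real n) = R * exp 1 * Lg"
        unfolding R_def Lg_def by simp
      also have "R * exp 1 * Lg \<le> R * 3 * Lg"
        using e3 R4 Lg1 by (intro mult_right_mono mult_left_mono) auto
      finally show ?thesis using Lg1 by simp
    qed
    have lp: "1 / (real lam * p) = exp 1 * V"
      unfolding p_def V_def using lampos by (simp add: field_simps)
    have b: "exp 1 * (1 + 8 / (real lam * p)) \<le> 3 * Lg + 72 * V"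
    proof -
      have "exp 1 * (1 + 8 / (real lam * p)) = exp 1 + 8 * exp 1 * (1 / (real lam * p))"
        by (simp add: distrib_left)
      also have "\<dots> = exp 1 + 8 * ((exp 1 * exp 1) * V)" unfolding lp by (simp add: algebra_simps)
      finally have eq: "exp 1 * (1 + 8 / (real lam * p)) = exp 1 + 8 * ((exp 1 * exp 1) * V)" .
      have "exp 1 * exp 1 \<le> 3 * (3::real)" using e3 by (intro mult_mono) auto
      then have "(exp 1 * exp 1) * V \<le> 9 * V" using V0 by (intro mult_right_mono) auto
      then show ?thesis using eq e3 Lg1 by linarith
    qed
    have c: "exp (- real lam / 3) * (ln (real lam) / p + 1) \<le> 108 * V + Lg"
    proof -
      have ll: "ln (real lam) \<le> real lam" using ln_le_minus_one[OF lampos] by simp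
      have ex1: "exp (- real lam / 3) \<le> 1" using lampos by simp
      have sq: "real lam ^ 2 * exp (- real lam / 3) \<le> 36" by (rule h_sq_exp) simp
      have "ln (real lam) / p = exp 1 * real n ^ r * ln (real lam)" unfolding p_def by simp
      also have "\<dots> \<le> exp 1 * real n ^ r * real lam" using ll nrpos by (intro mult_left_mono) auto
      finally have "exp (- real lam / 3) * (ln (real lam) / p) \<le> exp (- real lam / 3) * (exp 1 * real n ^ r * real lam)"
        by (intro mult_left_mono) auto
      also have "\<dots> = exp 1 * V * (real lam ^ 2 * exp (- real lam / 3))"
        unfolding V_def using lampos by (simp add: field_simps power2_eq_square)
      also have "\<dots> \<le> exp 1 * V * 36" using sq V0 by (intro mult_left_mono) auto
      also have "\<dots> \<le> 3 * V * 36" using e3 V0 by (intro mult_right_mono) auto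
      finally have X: "exp (- real lam / 3) * (ln (real lam) / p) \<le> 108 * V" by simp
      have "exp (- real lam / 3) * (ln (real lam) / p + 1) = exp (- real lam / 3) * (ln (real lam) / p) + exp (- real lam / 3)"
        by (simp add: distrib_left)
      then show ?thesis using X ex1 Lg1 by linarith
    qed
    have d: "real (2 * KB) * (exp 2 / 2 ^ lam) \<le> 108 * R * (W + Lg) + 18 * Lg"
    proof -
      have "real (2 * KB) \<le> 4 * exp 1 * R * (real n ^ r * ln (real n)) + 2"
        using K_le unfolding R_def by (simp add: algebra_simps)
      also have "\<dots> \<le> 12 * R * (real n ^ r * ln (real n)) + 2"
        using e3 R4 nrpos lnn0 by (intro add_right_mono mult_right_mono) auto
      finally have K2: "real (2 * KB) \<le> 12 * R * (real n ^ r * ln (real n)) + 2" .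
      have e2: "exp 2 \<le> (9::real)"
      proof -
        have "exp 2 = exp 1 * exp (1::real)" by (simp add: exp_add[symmetric])
        also have "\<dots> \<le> 3 * 3" using e3 by (intro mult_mono) auto
        finally show ?thesis by simp
      qed
      have "real (2 * KB) * (exp 2 / 2 ^ lam) \<le> (12 * R * (real n ^ r * ln (real n)) + 2) * (9 / 2 ^ lam)"
        using K2 e2 by (intro mult_mono divide_right_mono) auto
      also have "\<dots> = 108 * R * (real n ^ r * ln (real n) / 2 ^ lam) + 18 / 2 ^ lam"
        by (simp add: algebra_simps)
      also have "\<dots> \<le> 108 * R * (W + Lg) + 18 * Lg"
      proof -
        have "real n ^ r * ln (real n) / 2 ^ lam \<le> W + Lg" using KL unfolding W_def Lg_def .
        then have "108 * R * (real n ^ r * ln (real n) / 2 ^ lam) \<le> 108 * R * (W + Lg)"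
          using R4 by (intro mult_left_mono) auto
        moreover have "18 / (2::real) ^ lam \<le> 18 * Lg"
        proof -
          have "18 / (2::real) ^ lam \<le> 18 / 1" by (intro divide_left_mono) auto
          then show ?thesis using Lg1 by simp
        qed
        ultimately show ?thesis by linarith
      qed
      finally show ?thesis .
    qed
    have e: "exp 1 * (1 / 2) ^ lam * (4 / (real lam * q)) \<le> 36 * W"
    proof -
      have eq: "exp 1 * (1 / 2) ^ lam * (4 / (real lam * q)) = 4 * (exp 1 * exp 1) * W"
        unfolding q_def W_def using lampos by (simp add: field_simps power_divide)
      have "exp 1 * exp 1 \<le> 3 * (3::real)" using e3 by (intro mult_mono) auto
      then have "(exp 1 * exp 1) * W \<le> 9 * W" using W0 by (intro mult_right_mono) auto
      then show ?thesis using eq by linarith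
    qed
    have RL: "R * Lg \<ge> 4 * Lg" "R * W \<ge> 4 * W" "R * V \<ge> 4 * V"
      using R4 Lg1 W0 V0 by (auto intro: mult_right_mono)
    have q1: "120 * R * (Lg + W + V) = 120 * (R * Lg) + 120 * (R * W) + 120 * (R * V)"
      by (simp add: algebra_simps)
    have q2: "108 * R * (W + Lg) = 108 * (R * W) + 108 * (R * Lg)" by (simp add: algebra_simps)
    have q3: "3 * R * Lg = 3 * (R * Lg)" by simp
    define A1 where "A1 = real T0"
    define A2 where "A2 = exp 1 * (1 + 8 / (real lam * p))"
    define A3 where "A3 = exp (- real lam / 3) * (ln (real lam) / p + 1)"
    define A4 where "A4 = real (2 * KB) * (exp 2 / 2 ^ lam)"
    define A5 where "A5 = exp 1 * (1 / 2) ^ lam * (4 / (real lam * q))"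
    define X1 where "X1 = R * Lg"
    define X2 where "X2 = R * W"
    define X3 where "X3 = R * V"
    have "A1 \<le> 3 * X1 + Lg" using a q3 unfolding A1_def X1_def by linarith
    moreover have "A2 \<le> 3 * Lg + 72 * V" using b unfolding A2_def .
    moreover have "A3 \<le> 108 * V + Lg" using c unfolding A3_def .
    moreover have "A4 \<le> 108 * X2 + 108 * X1 + 18 * Lg" using d q2 unfolding A4_def X1_def X2_def by linarith
    moreover have "A5 \<le> 36 * W" using e unfolding A5_def .
    moreover have "4 * Lg \<le> X1" "4 * W \<le> X2" "4 * V \<le> X3" using RL unfolding X1_def X2_def X3_def by auto
    ultimately have "A1 + A2 + A3 + A4 + A5 \<le> 120 * X1 + 120 * X2 + 120 * X3" using Lg1 W0 V0 by linarith
    then show ?thesis using q1 unfolding A1_def A2_def A3_def A4_def A5_def X1_def X2_def X3_def by linarith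
  qed
  finally show ?thesis unfolding Lg_def W_def V_def R_def .
qed

end


lemma final_bound:
  assumes r2: "2 \<le> r" and n4: "4 \<le> n" and rn: "2 * r \<le> n" and lam1: "1 \<le> lam" and lamn: "lam \<le> n ^ r"
  shows "expected_T n r lam \<le> ennreal (120 * real (r + 2) *
    (real n * ln (real n) + real n ^ (2 * r) / (real lam * 2 ^ lam) + real n ^ r / real lam))"
proof -
  define B where "B = 120 * real (r + 2) *
    (real n * ln (real n) + real n ^ (2 * r) / (real lam * 2 ^ lam) + real n ^ r / real lam)"
  have r0: "0 < r" using r2 by simp
  have part: "(\<Sum>t<N. (1 - po n r t) ^ lam) \<le> B" for N
    unfolding B_def
  proof (rule S7[where p = "ppr n r" and q = "qq n r" and d = "1 / (exp 1 * real n)" and u = "pu n r"])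
    show "2 \<le> r" "4 \<le> n" "1 \<le> lam" "lam \<le> n ^ r" by fact+
    show "ppr n r = 1 / (exp 1 * real n ^ r)" by (rule ppr_def[OF r2 rn])
    show "qq n r = 1 / (exp 1 * real n ^ (2 * r))" by (rule qq_def[OF r2 rn])
    show "1 / (exp 1 * real n) = 1 / (exp 1 * real n)" by (rule refl)
    show "0 \<le> 1 - po n r t" for t unfolding po_def[OF r0 rn] by (simp add: pmf_le_1)
    show "1 - po n r t \<le> 1" for t unfolding po_def[OF r0 rn] by simp
    show "1 - po n r t \<le> (1 + pu n r t) / 2" for t by (rule A2[OF r2 rn])
    show "1 - po n r t \<le> (1 - qq n r) ^ (t - s) / 2 + pu n r s" if "s \<le> t" for s t
      by (rule A3[OF r2 rn that])
    show "pu n r t \<le> (1 - ppr n r) ^ (t - s) * (1 + real n * (1 - 1 / (exp 1 * real n)) ^ s)" if "s \<le> t" for s t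
      by (rule pu_bound[OF r2 rn that])
  qed
  have nonneg: "0 \<le> (1 - po n r t) ^ lam" for t
    unfolding po_def[OF r0 rn] by (simp add: pmf_le_1)
  have "expected_T n r lam = (\<Sum>t. ennreal ((1 - po n r t) ^ lam))"
    by (rule expected_T_eq[OF r2 rn])
  also have "\<dots> \<le> ennreal B"
  proof -
    have "(\<Sum>t. ennreal ((1 - po n r t) ^ lam)) = (SUP N. \<Sum>t<N. ennreal ((1 - po n r t) ^ lam))"
      by (rule suminf_eq_SUP)
    also have "\<dots> \<le> ennreal B"
    proof (rule SUP_least)
      fix N
      have "(\<Sum>t<N. ennreal ((1 - po n r t) ^ lam)) = ennreal (\<Sum>t<N. (1 - po n r t) ^ lam)"
        using nonneg by (simp add: sum_ennreal)
      also have "\<dots> \<le> ennreal B" using part by (rule ennreal_leI)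
      finally show "(\<Sum>t<N. ennreal ((1 - po n r t) ^ lam)) \<le> ennreal B" .
    qed
    finally show ?thesis .
  qed
  finally show ?thesis unfolding B_def .
qed

theorem theorem4:
  fixes r :: nat and lam :: "nat \<Rightarrow> nat"
  assumes "r \<ge> 2"
    and "\<forall>\<^sub>F n in at_top. 1 \<le> lam n \<and> lam n \<le> n ^ r"
  shows "\<exists>C>0. \<forall>\<^sub>F n in at_top.
           expected_T n r (lam n) \<le>
             ennreal (C * (real n * ln (real n)
                           + real n ^ (2 * r) / (real (lam n) * 2 ^ lam n)
                           + real n ^ r / real (lam n)))"
proof (intro exI conjI)
  show "(0::real) < 120 * real (r + 2)" by simp
  have ev: "\<forall>\<^sub>F n in at_top. 4 + 2 * r \<le> n" by (rule eventually_ge_at_top)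
  show "\<forall>\<^sub>F n in at_top. expected_T n r (lam n) \<le>
             ennreal (120 * real (r + 2) * (real n * ln (real n)
                           + real n ^ (2 * r) / (real (lam n) * 2 ^ lam n)
                           + real n ^ r / real (lam n)))"
    using ev assms(2)
  proof eventually_elim
    case (elim n)
    then show ?case using final_bound[OF assms(1), of n "lam n"] by simp
  qed
qed


end
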